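(* A weakly semi-symmetric K-contact manifold is Sasakian.
   Context: A contact metric structure $(M,\eta,\xi,\phi,g)$ consists of a contact form $\eta$, its Reeb field $\xi$, a Riemannian metric $g$ and an endomorphism field $\phi$ with $\eta(\xi)=1$, $\phi^2=-\mathrm{Id}+\eta\otimes\xi$, $\phi\xi=0$, $d\eta=2g(\cdot,\phi\cdot)$. It is K-contact if $h=\frac12L_\xi\phi=0$, and Sasakian if $(\nabla_X\phi)Y=g(X,Y)\xi-\eta(Y)X$ for all $X,Y$ (equivalently $R(X,Y)\xi=\eta(Y)X-\eta(X)Y$), where $\nabla$ is the Levi-Civita connection and $R(X,Y)Z=\nabla_X\nabla_YZ-\nabla_Y\nabla_XZ-\nabla_{[X,Y]}Z$. It is weakly semi-symmetric if $R(X,\xi)\cdot R=0$ for all $X$, where $R(X,\xi)$ acts as a derivation on the curvature tensor: $(R(X,\xi)\cdot R)(Y,Z)W=R(X,\xi)R(Y,Z)W-R(R(X,\xi)Y,Z)W-R(Y,R(X,\xi)Z)W-R(Y,Z)R(X,\xi)W$. *)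

theory Defs
  imports "HOL-Analysis.Analysis"
begin

text \<open>Local-coordinate model: the manifold is an open set U in real^'n.
  Vector fields are maps real^'n => real^'n, (1,1)-tensor fields and the metric
  are matrix-valued maps real^'n => real^'n^'n, the 1-form eta is given by its
  component vector (eta(X) = eta x \<bullet> X x).\<close>

definition pd :: "'n::finite \<Rightarrow> (real^'n \<Rightarrow> real) \<Rightarrow> real^'n \<Rightarrow> real" where
  "pd i f x = deriv (\<lambda>t. f (x + t *\<^sub>R axis i 1)) 0"

text \<open>C-infinity: every iterated partial derivative is (Frechet) differentiable on U.\<close>
definition smooth_fun :: "(real^'n::finite) set \<Rightarrow> (real^'n \<Rightarrow> real) \<Rightarrow> bool" where
  "smooth_fun U f \<longleftrightarrow> (\<forall>is :: 'n list. foldr pd is f differentiable_on U)"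

definition smooth_vf :: "(real^'n::finite) set \<Rightarrow> (real^'n \<Rightarrow> real^'n) \<Rightarrow> bool" where
  "smooth_vf U X \<longleftrightarrow> (\<forall>k. smooth_fun U (\<lambda>y. X y $ k))"

definition smooth_tf :: "(real^'n::finite) set \<Rightarrow> (real^'n \<Rightarrow> real^'n^'n) \<Rightarrow> bool" where
  "smooth_tf U A \<longleftrightarrow> (\<forall>i j. smooth_fun U (\<lambda>y. A y $ i $ j))"

definition dirD :: "(real^'n::finite \<Rightarrow> real^'n) \<Rightarrow> (real^'n \<Rightarrow> real) \<Rightarrow> real^'n \<Rightarrow> real" where
  "dirD X f x = (\<Sum>i\<in>UNIV. X x $ i * pd i f x)"

definition vdirD :: "(real^'n::finite \<Rightarrow> real^'n) \<Rightarrow> (real^'n \<Rightarrow> real^'n) \<Rightarrow> real^'n \<Rightarrow> real^'n" where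
  "vdirD X Y x = (\<chi> k. dirD X (\<lambda>y. Y y $ k) x)"

definition lie :: "(real^'n::finite \<Rightarrow> real^'n) \<Rightarrow> (real^'n \<Rightarrow> real^'n) \<Rightarrow> real^'n \<Rightarrow> real^'n" where
  "lie X Y x = vdirD X Y x - vdirD Y X x"

definition gpt :: "(real^'n::finite \<Rightarrow> real^'n^'n) \<Rightarrow> real^'n \<Rightarrow> real^'n \<Rightarrow> real^'n \<Rightarrow> real" where
  "gpt g x u v = u \<bullet> (g x *v v)"

definition christoffel :: "(real^'n::finite \<Rightarrow> real^'n^'n) \<Rightarrow> real^'n \<Rightarrow> 'n \<Rightarrow> 'n \<Rightarrow> 'n \<Rightarrow> real" where
  "christoffel g x k i j = (1/2) * (\<Sum>l\<in>UNIV. matrix_inv (g x) $ k $ l *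
      (pd i (\<lambda>y. g y $ j $ l) x + pd j (\<lambda>y. g y $ i $ l) x - pd l (\<lambda>y. g y $ i $ j) x))"

definition nabla :: "(real^'n::finite \<Rightarrow> real^'n^'n) \<Rightarrow> (real^'n \<Rightarrow> real^'n) \<Rightarrow> (real^'n \<Rightarrow> real^'n) \<Rightarrow> real^'n \<Rightarrow> real^'n" where
  "nabla g X Y x = vdirD X Y x + (\<chi> k. \<Sum>i\<in>UNIV. \<Sum>j\<in>UNIV. christoffel g x k i j * X x $ i * Y x $ j)"

definition curv :: "(real^'n::finite \<Rightarrow> real^'n^'n) \<Rightarrow> (real^'n \<Rightarrow> real^'n) \<Rightarrow> (real^'n \<Rightarrow> real^'n) \<Rightarrow> (real^'n \<Rightarrow> real^'n) \<Rightarrow> real^'n \<Rightarrow> real^'n" where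
  "curv g X Y Z x = nabla g X (nabla g Y Z) x - nabla g Y (nabla g X Z) x - nabla g (lie X Y) Z x"

text \<open>d eta (X,Y) = X(eta Y) - Y(eta X) - eta([X,Y])  (convention without 1/2, so that
  d eta = 2 g(.,phi .) as in the paper)\<close>
definition deta :: "(real^'n::finite \<Rightarrow> real^'n) \<Rightarrow> (real^'n \<Rightarrow> real^'n) \<Rightarrow> (real^'n \<Rightarrow> real^'n) \<Rightarrow> real^'n \<Rightarrow> real" where
  "deta eta X Y x = dirD X (\<lambda>y. eta y \<bullet> Y y) x - dirD Y (\<lambda>y. eta y \<bullet> X y) x - eta x \<bullet> lie X Y x"

text \<open>d eta at a point (it is tensorial), evaluated on constant extensions\<close>
definition deta_pt :: "(real^'n::finite \<Rightarrow> real^'n) \<Rightarrow> real^'n \<Rightarrow> real^'n \<Rightarrow> real^'n \<Rightarrow> real" where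
  "deta_pt eta x u v = deta eta (\<lambda>_. u) (\<lambda>_. v) x"

definition contact_metric_structure ::
  "(real^'n::finite) set \<Rightarrow> (real^'n \<Rightarrow> real^'n) \<Rightarrow> (real^'n \<Rightarrow> real^'n) \<Rightarrow> (real^'n \<Rightarrow> real^'n^'n) \<Rightarrow> (real^'n \<Rightarrow> real^'n^'n) \<Rightarrow> bool" where
  "contact_metric_structure U eta xi phi g \<longleftrightarrow>
     open U \<and> smooth_vf U eta \<and> smooth_vf U xi \<and> smooth_tf U phi \<and> smooth_tf U g \<and>
     \<comment> \<open>g is a Riemannian metric\<close>
     (\<forall>x\<in>U. transpose (g x) = g x \<and> (\<forall>v. v \<noteq> 0 \<longrightarrow> gpt g x v v > 0)) \<and>
     \<comment> \<open>eta is a contact form: eta nonzero and d eta nondegenerate on ker eta\<close>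
     (\<forall>x\<in>U. eta x \<noteq> 0 \<and>
        (\<forall>u. eta x \<bullet> u = 0 \<and> u \<noteq> 0 \<longrightarrow> (\<exists>v. eta x \<bullet> v = 0 \<and> deta_pt eta x u v \<noteq> 0))) \<and>
     \<comment> \<open>xi is the Reeb field\<close>
     (\<forall>x\<in>U. eta x \<bullet> xi x = 1 \<and> (\<forall>v. deta_pt eta x (xi x) v = 0)) \<and>
     \<comment> \<open>phi^2 = -Id + eta (x) xi, phi xi = 0\<close>
     (\<forall>x\<in>U. \<forall>v. phi x *v (phi x *v v) = - v + (eta x \<bullet> v) *\<^sub>R xi x) \<and>
     (\<forall>x\<in>U. phi x *v xi x = 0) \<and>
     \<comment> \<open>compatibility g(phi X, phi Y) = g(X,Y) - eta(X) eta(Y)\<close>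
     (\<forall>x\<in>U. \<forall>u v. gpt g x (phi x *v u) (phi x *v v) = gpt g x u v - (eta x \<bullet> u) * (eta x \<bullet> v)) \<and>
     \<comment> \<open>d eta = 2 g(., phi .)\<close>
     (\<forall>x\<in>U. \<forall>u v. deta_pt eta x u v = 2 * gpt g x u (phi x *v v))"

text \<open>K-contact: h = (1/2) L_xi phi = 0, where (L_xi phi) X = [xi, phi X] - phi [xi, X]\<close>
definition K_contact ::
  "(real^'n::finite) set \<Rightarrow> (real^'n \<Rightarrow> real^'n) \<Rightarrow> (real^'n \<Rightarrow> real^'n) \<Rightarrow> (real^'n \<Rightarrow> real^'n^'n) \<Rightarrow> (real^'n \<Rightarrow> real^'n^'n) \<Rightarrow> bool" where
  "K_contact U eta xi phi g \<longleftrightarrow>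
     (\<forall>X. smooth_vf U X \<longrightarrow> (\<forall>x\<in>U.
        (1/2) *\<^sub>R (lie xi (\<lambda>y. phi y *v X y) x - phi x *v lie xi X x) = 0))"

definition Sasakian ::
  "(real^'n::finite) set \<Rightarrow> (real^'n \<Rightarrow> real^'n) \<Rightarrow> (real^'n \<Rightarrow> real^'n) \<Rightarrow> (real^'n \<Rightarrow> real^'n^'n) \<Rightarrow> (real^'n \<Rightarrow> real^'n^'n) \<Rightarrow> bool" where
  "Sasakian U eta xi phi g \<longleftrightarrow>
     (\<forall>X Y. smooth_vf U X \<longrightarrow> smooth_vf U Y \<longrightarrow> (\<forall>x\<in>U.
        nabla g X (\<lambda>y. phi y *v Y y) x - phi x *v nabla g X Y x
          = gpt g x (X x) (Y x) *\<^sub>R xi x - (eta x \<bullet> Y x) *\<^sub>R X x))"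

definition weakly_semi_symmetric ::
  "(real^'n::finite) set \<Rightarrow> (real^'n \<Rightarrow> real^'n) \<Rightarrow> (real^'n \<Rightarrow> real^'n) \<Rightarrow> (real^'n \<Rightarrow> real^'n^'n) \<Rightarrow> (real^'n \<Rightarrow> real^'n^'n) \<Rightarrow> bool" where
  "weakly_semi_symmetric U eta xi phi g \<longleftrightarrow>
     (\<forall>X Y Z W. smooth_vf U X \<longrightarrow> smooth_vf U Y \<longrightarrow> smooth_vf U Z \<longrightarrow> smooth_vf U W \<longrightarrow>
       (\<forall>x\<in>U.
          curv g X xi (curv g Y Z W) x
          - curv g (curv g X xi Y) Z W x
          - curv g Y (curv g X xi Z) W x
          - curv g Y Z (curv g X xi W) x = 0))"

end

theory Submission
  imports Defs
begin

section \<open>Partial derivatives\<close>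

lemma pd_has:
  fixes f :: "real^'n::finite \<Rightarrow> real"
  assumes "(f has_derivative f') (at x)"
  shows "pd i f x = f' (axis i 1)"
proof -
  have lin: "linear f'" using assms has_derivative_linear by blast
  have d1: "((\<lambda>t::real. x + t *\<^sub>R axis i 1) has_derivative (\<lambda>t. t *\<^sub>R axis i 1)) (at 0)"
    by (auto intro!: derivative_eq_intros)
  have "((\<lambda>t. f (x + t *\<^sub>R axis i 1)) has_derivative (\<lambda>t. f' (t *\<^sub>R axis i 1))) (at 0)"
    using diff_chain_at[OF d1, of f f'] assms by (simp add: o_def)
  moreover have "(\<lambda>t. f' (t *\<^sub>R axis i 1)) = (\<lambda>t. f' (axis i 1) * t)"
    using lin by (auto simp: linear_scale mult.commute)
  ultimately have "((\<lambda>t. f (x + t *\<^sub>R axis i 1)) has_real_derivative f' (axis i 1)) (at 0)"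
    by (simp add: has_field_derivative_def)
  then show ?thesis unfolding pd_def by (rule DERIV_imp_deriv)
qed

lemma pd_fd:
  fixes f :: "real^'n::finite \<Rightarrow> real"
  assumes "f differentiable (at x)"
  shows "pd i f x = frechet_derivative f (at x) (axis i 1)"
  using assms by (simp add: pd_has frechet_derivative_works)

lemma pd_const[simp]: "pd i (\<lambda>y. c) x = 0"
  by (rule pd_has[of _ "\<lambda>_. 0", simplified]) (rule has_derivative_const)

lemma pd_add:
  fixes f h :: "real^'n::finite \<Rightarrow> real"
  assumes "f differentiable (at x)" "h differentiable (at x)"
  shows "pd i (\<lambda>y. f y + h y) x = pd i f x + pd i h x"
  using assms unfolding frechet_derivative_works
  by (simp add: pd_has[OF has_derivative_add[OF assms[unfolded frechet_derivative_works]]] pd_has)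

lemma pd_diff:
  fixes f h :: "real^'n::finite \<Rightarrow> real"
  assumes "f differentiable (at x)" "h differentiable (at x)"
  shows "pd i (\<lambda>y. f y - h y) x = pd i f x - pd i h x"
  using assms unfolding frechet_derivative_works
  by (simp add: pd_has[OF has_derivative_diff[OF assms[unfolded frechet_derivative_works]]] pd_has)

lemma pd_minus:
  fixes f :: "real^'n::finite \<Rightarrow> real"
  assumes "f differentiable (at x)"
  shows "pd i (\<lambda>y. - f y) x = - pd i f x"
  using assms unfolding frechet_derivative_works
  by (simp add: pd_has[OF has_derivative_minus[OF assms[unfolded frechet_derivative_works]]] pd_has)

lemma pd_mult:
  fixes f h :: "real^'n::finite \<Rightarrow> real"
  assumes "f differentiable (at x)" "h differentiable (at x)"
  shows "pd i (\<lambda>y. f y * h y) x = pd i f x * h x + f x * pd i h x"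
  using assms unfolding frechet_derivative_works
  by (simp add: pd_has[OF has_derivative_mult[OF assms[unfolded frechet_derivative_works]]] pd_has)

lemma pd_cmult:
  fixes f :: "real^'n::finite \<Rightarrow> real"
  assumes "f differentiable (at x)"
  shows "pd i (\<lambda>y. c * f y) x = c * pd i f x"
  using pd_mult[OF differentiable_const assms] by simp

lemma pd_sum:
  fixes f :: "'a \<Rightarrow> real^'n::finite \<Rightarrow> real"
  assumes "finite S" "\<And>a. a \<in> S \<Longrightarrow> f a differentiable (at x)"
  shows "pd i (\<lambda>y. \<Sum>a\<in>S. f a y) x = (\<Sum>a\<in>S. pd i (f a) x)"
proof -
  have "((\<lambda>y. \<Sum>a\<in>S. f a y) has_derivative (\<lambda>h. \<Sum>a\<in>S. frechet_derivative (f a) (at x) h)) (at x)"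
    by (rule has_derivative_sum) (use assms(2) in \<open>simp add: frechet_derivative_works\<close>)
  then show ?thesis
    using assms(2) by (simp add: pd_has pd_fd)
qed

lemma ev_nhds_line:
  fixes x :: "real^'n::finite"
  assumes "open U" "x \<in> U"
  shows "eventually (\<lambda>t::real. x + t *\<^sub>R v \<in> U) (nhds 0)"
proof -
  have "open ((\<lambda>t::real. x + t *\<^sub>R v) -` U)"
    by (rule continuous_open_vimage[OF assms(1)]) (intro continuous_intros)
  moreover have "(0::real) \<in> (\<lambda>t::real. x + t *\<^sub>R v) -` U" using assms by simp
  ultimately show ?thesis unfolding eventually_nhds by blast
qed

lemma pd_local:
  fixes f h :: "real^'n::finite \<Rightarrow> real"
  assumes "open U" "x \<in> U" "\<And>y. y \<in> U \<Longrightarrow> f y = h y"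
  shows "pd i f x = pd i h x"
  unfolding pd_def
  by (rule deriv_cong_ev[OF eventually_mono[OF ev_nhds_line[OF assms(1,2)]] refl]) (use assms in auto)

lemma diff_local:
  fixes f h :: "real^'n::finite \<Rightarrow> real"
  assumes "open U" "x \<in> U" "\<And>y. y \<in> U \<Longrightarrow> f y = h y" "f differentiable (at x)"
  shows "h differentiable (at x)"
proof -
  obtain d where d: "d > 0" "ball x d \<subseteq> U" using assms(1,2) open_contains_ball by blast
  have "\<And>x'. dist x' x < d \<Longrightarrow> f x' = h x'"
    using d assms(3) by (metis mem_ball dist_commute subsetD)
  then show ?thesis
    using differentiable_transform_within[of f x UNIV d h] assms d by auto
qed

lemma diffon_local:
  fixes f h :: "real^'n::finite \<Rightarrow> real"
  assumes "open U" "\<And>y. y \<in> U \<Longrightarrow> f y = h y" "f differentiable_on U"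
  shows "h differentiable_on U"
  using assms diff_local[of U _ f h] by (auto simp: differentiable_on_eq_differentiable_at)

lemma foldr_pd_local:
  fixes f h :: "real^'n::finite \<Rightarrow> real"
  assumes "open U" "\<And>y. y \<in> U \<Longrightarrow> f y = h y" "y \<in> U"
  shows "foldr pd is f y = foldr pd is h y"
  using assms(3)
proof (induction "is" arbitrary: y)
  case Nil then show ?case using assms(2) by simp
next
  case (Cons j js)
  then show ?case using pd_local[OF assms(1) Cons.prems, of "foldr pd js f" "foldr pd js h"] by simp
qed

section \<open>Smooth functions\<close>

inductive_set SF :: "(real^'n::finite) set \<Rightarrow> (real^'n \<Rightarrow> real) set" for U where
  base: "smooth_fun U f \<Longrightarrow> f \<in> SF U"
| add: "f \<in> SF U \<Longrightarrow> h \<in> SF U \<Longrightarrow> (\<lambda>y. f y + h y) \<in> SF U"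
| mult: "f \<in> SF U \<Longrightarrow> h \<in> SF U \<Longrightarrow> (\<lambda>y. f y * h y) \<in> SF U"
| inv: "f \<in> SF U \<Longrightarrow> (\<And>y. y \<in> U \<Longrightarrow> f y \<noteq> 0) \<Longrightarrow> (\<lambda>y. inverse (f y)) \<in> SF U"
| equ: "f \<in> SF U \<Longrightarrow> (\<And>y. y \<in> U \<Longrightarrow> h y = f y) \<Longrightarrow> h \<in> SF U"

lemma foldr_pd_const: "foldr pd is (\<lambda>y. c) = (\<lambda>y. if is = [] then c else 0)"
  by (induction "is") auto

lemma smooth_const[simp]: "smooth_fun U (\<lambda>y. c)"
  unfolding smooth_fun_def foldr_pd_const by auto

lemma smooth_diffon: "smooth_fun U f \<Longrightarrow> f differentiable_on U"
  unfolding smooth_fun_def by (metis foldr.simps(1) id_apply)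

lemma smooth_pd: "smooth_fun U f \<Longrightarrow> smooth_fun U (pd i f)"
  unfolding smooth_fun_def
proof
  fix "is" assume "\<forall>is. foldr pd is f differentiable_on U"
  then have "foldr pd (is @ [i]) f differentiable_on U" by blast
  then show "foldr pd is (pd i f) differentiable_on U" by simp
qed

lemma SF_diffon:
  assumes "open U" "f \<in> SF U"
  shows "f differentiable_on U"
  using assms(2)
proof induction
  case (base f) then show ?case by (rule smooth_diffon)
next
  case (add f h) then show ?case by (auto simp: differentiable_on_def)
next
  case (mult f h) then show ?case using assms(1) by (auto simp: differentiable_on_eq_differentiable_at)
next
  case (inv f) then show ?case using assms(1) by (auto simp: differentiable_on_eq_differentiable_at)
next
  case (equ f h) then show ?case using diffon_local[OF assms(1), of f h] by auto
qed

lemma SF_const: "(\<lambda>y. c) \<in> SF U"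
  by (rule SF.base) simp

lemma SF_pd:
  assumes "open U" "f \<in> SF U"
  shows "\<exists>h\<in>SF U. \<forall>y\<in>U. pd i f y = h y"
  using assms(2)
proof induction
  case (base f) then show ?case by (intro bexI[of _ "pd i f"] SF.base smooth_pd) auto
next
  case (add f h)
  then obtain f' h' where "f' \<in> SF U" "h' \<in> SF U" "\<forall>y\<in>U. pd i f y = f' y" "\<forall>y\<in>U. pd i h y = h' y" by blast
  moreover have "\<forall>y\<in>U. pd i (\<lambda>y. f y + h y) y = pd i f y + pd i h y"
    using SF_diffon[OF assms(1) add.hyps(1)] SF_diffon[OF assms(1) add.hyps(2)] assms(1)
    by (auto simp: differentiable_on_eq_differentiable_at intro!: pd_add)
  ultimately show ?case by (intro bexI[of _ "\<lambda>y. f' y + h' y"] SF.add) auto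
next
  case (mult f h)
  then obtain f' h' where "f' \<in> SF U" "h' \<in> SF U" "\<forall>y\<in>U. pd i f y = f' y" "\<forall>y\<in>U. pd i h y = h' y" by blast
  moreover have "\<forall>y\<in>U. pd i (\<lambda>y. f y * h y) y = pd i f y * h y + f y * pd i h y"
    using SF_diffon[OF assms(1) mult.hyps(1)] SF_diffon[OF assms(1) mult.hyps(2)] assms(1)
    by (auto simp: differentiable_on_eq_differentiable_at intro!: pd_mult)
  ultimately show ?case using mult.hyps by (intro bexI[of _ "\<lambda>y. f' y * h y + f y * h' y"] SF.add SF.mult) auto
next
  case (inv f)
  then obtain f' where f': "f' \<in> SF U" "\<forall>y\<in>U. pd i f y = f' y" by blast
  have "\<forall>y\<in>U. pd i (\<lambda>y. inverse (f y)) y = (-1) * (f' y * (inverse (f y) * inverse (f y)))"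
  proof
    fix y assume y: "y \<in> U"
    have "f differentiable (at y)"
      using SF_diffon[OF assms(1) inv.hyps(1)] assms(1) y by (auto simp: differentiable_on_eq_differentiable_at)
    then have "(f has_derivative frechet_derivative f (at y)) (at y)" by (simp add: frechet_derivative_works)
    from Deriv.has_derivative_inverse[OF inv.hyps(2)[OF y] this]
    have "pd i (\<lambda>y. inverse (f y)) y = - (inverse (f y) * frechet_derivative f (at y) (axis i 1) * inverse (f y))"
      by (rule pd_has)
    also have "frechet_derivative f (at y) (axis i 1) = pd i f y"
      using \<open>f differentiable (at y)\<close> by (simp add: pd_fd)
    finally show "pd i (\<lambda>y. inverse (f y)) y = (-1) * (f' y * (inverse (f y) * inverse (f y)))"
      using f' y by (simp add: algebra_simps)
  qed
  then show ?case using inv.hyps f'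
    by (intro bexI[of _ "\<lambda>y. (-1) * (f' y * (inverse (f y) * inverse (f y)))"] SF.mult SF_const SF.inv) auto
next
  case (equ f h)
  then obtain f' where "f' \<in> SF U" "\<forall>y\<in>U. pd i f y = f' y" by blast
  moreover have "\<forall>y\<in>U. pd i h y = pd i f y" using pd_local[OF assms(1), of _ h f] equ.hyps by auto
  ultimately show ?case by auto
qed

lemma SF_smooth:
  assumes "open U" "f \<in> SF U"
  shows "smooth_fun U f"
  unfolding smooth_fun_def
proof
  fix "is" :: "'a list"
  show "foldr pd is f differentiable_on U"
    using assms(2)
  proof (induction "is" arbitrary: f rule: rev_induct)
    case Nil then show ?case using SF_diffon[OF assms(1)] by simp
  next
    case (snoc i js)
    obtain h where h: "h \<in> SF U" "\<forall>y\<in>U. pd i f y = h y" using SF_pd[OF assms(1) snoc.prems] by blast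
    have "foldr pd js h differentiable_on U" using snoc.IH[OF h(1)] .
    moreover have "\<And>y. y \<in> U \<Longrightarrow> foldr pd js h y = foldr pd js (pd i f) y"
      using foldr_pd_local[OF assms(1), of h "pd i f"] h(2) by auto
    ultimately have "foldr pd js (pd i f) differentiable_on U"
      using diffon_local[OF assms(1), of "foldr pd js h" "foldr pd js (pd i f)"] by blast
    then show ?case by simp
  qed
qed

lemma SF_iff: "open U \<Longrightarrow> f \<in> SF U \<longleftrightarrow> smooth_fun U f"
  using SF_smooth SF.base by blast

lemma smooth_add: "open U \<Longrightarrow> smooth_fun U f \<Longrightarrow> smooth_fun U h \<Longrightarrow> smooth_fun U (\<lambda>y. f y + h y)"
  by (simp add: SF_iff[symmetric] SF.add)
lemma smooth_mult: "open U \<Longrightarrow> smooth_fun U f \<Longrightarrow> smooth_fun U h \<Longrightarrow> smooth_fun U (\<lambda>y. f y * h y)"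
  by (simp add: SF_iff[symmetric] SF.mult)
lemma smooth_inverse: "open U \<Longrightarrow> smooth_fun U f \<Longrightarrow> (\<And>y. y \<in> U \<Longrightarrow> f y \<noteq> 0) \<Longrightarrow> smooth_fun U (\<lambda>y. inverse (f y))"
  by (simp add: SF_iff[symmetric] SF.inv)
lemma smooth_equ: "open U \<Longrightarrow> smooth_fun U f \<Longrightarrow> (\<And>y. y \<in> U \<Longrightarrow> h y = f y) \<Longrightarrow> smooth_fun U h"
  by (simp add: SF_iff[symmetric]) (metis SF.equ)
lemma smooth_minus: "open U \<Longrightarrow> smooth_fun U f \<Longrightarrow> smooth_fun U (\<lambda>y. - f y)"
  using smooth_mult[of U "\<lambda>_. -1" f] by simp
lemma smooth_diff: "open U \<Longrightarrow> smooth_fun U f \<Longrightarrow> smooth_fun U h \<Longrightarrow> smooth_fun U (\<lambda>y. f y - h y)"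
  using smooth_add[of U f "\<lambda>y. - h y"] smooth_minus[of U h] by simp
lemma smooth_sum:
  assumes "open U" "finite S" "\<And>a. a \<in> S \<Longrightarrow> smooth_fun U (f a)"
  shows "smooth_fun U (\<lambda>y. \<Sum>a\<in>S. f a y :: real)"
  using assms(2,3)
proof (induction S rule: finite_induct)
  case empty then show ?case by simp
next
  case (insert a S) then show ?case using smooth_add[OF assms(1), of "f a" "\<lambda>y. \<Sum>a\<in>S. f a y"] by simp
qed
lemma smooth_prod:
  assumes "open U" "finite S" "\<And>a. a \<in> S \<Longrightarrow> smooth_fun U (f a)"
  shows "smooth_fun U (\<lambda>y. \<Prod>a\<in>S. f a y :: real)"
  using assms(2,3)
proof (induction S rule: finite_induct)
  case empty then show ?case by simp
next
  case (insert a S) then show ?case using smooth_mult[OF assms(1), of "f a" "\<lambda>y. \<Prod>a\<in>S. f a y"] by simp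
qed

lemma smooth_diffat: "open U \<Longrightarrow> smooth_fun U f \<Longrightarrow> x \<in> U \<Longrightarrow> f differentiable (at x)"
  using smooth_diffon differentiable_on_eq_differentiable_at by blast


lemma line_deriv:
  fixes f :: "real^'n::finite \<Rightarrow> real"
  assumes "f differentiable (at (y + t *\<^sub>R axis a 1))"
  shows "((\<lambda>s. f (y + s *\<^sub>R axis a 1)) has_real_derivative pd a f (y + t *\<^sub>R axis a 1)) (at t)"
proof -
  let ?p = "y + t *\<^sub>R axis a 1"
  let ?f' = "frechet_derivative f (at ?p)"
  have fd: "(f has_derivative ?f') (at ?p)" using assms frechet_derivative_works by blast
  have lin: "linear ?f'" using fd has_derivative_linear by blast
  have d1: "((\<lambda>s::real. y + s *\<^sub>R axis a 1) has_derivative (\<lambda>s. s *\<^sub>R axis a 1)) (at t)"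
    by (auto intro!: derivative_eq_intros)
  have "((\<lambda>s. f (y + s *\<^sub>R axis a 1)) has_derivative (\<lambda>s. ?f' (s *\<^sub>R axis a 1))) (at t)"
    using diff_chain_at[OF d1, of f ?f'] fd by (simp add: o_def)
  moreover have "(\<lambda>s. ?f' (s *\<^sub>R axis a 1)) = (\<lambda>s. ?f' (axis a 1) * s)"
    using lin by (auto simp: linear_scale mult.commute)
  ultimately show ?thesis
    using pd_fd[OF assms, of a] by (simp add: has_field_derivative_def)
qed

lemma schwarz_half:
  fixes f :: "real^'n::finite \<Rightarrow> real"
  assumes U: "open U" "x \<in> U" and fd: "f differentiable_on U"
    and Gd: "pd a f differentiable (at x)" and e: "e > 0"
  shows "\<exists>d>0. \<forall>h. 0 < h \<and> h < d \<longrightarrow>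
     \<bar>(f (x + h *\<^sub>R axis a 1 + h *\<^sub>R axis b 1) - f (x + h *\<^sub>R axis a 1) - f (x + h *\<^sub>R axis b 1) + f x)
       - h^2 * pd b (pd a f) x\<bar> \<le> e * h^2"
proof -
  define G where "G = pd a f"
  define ea where "ea = (axis a 1 :: real^'n)"
  define eb where "eb = (axis b 1 :: real^'n)"
  obtain G' where G': "(G has_derivative G') (at x)" using Gd unfolding G_def differentiable_def by blast
  have lin: "linear G'" using G' has_derivative_linear by blast
  have pdG: "pd b G x = G' eb" using pd_has[OF G'] eb_def by simp
  have e3: "e/3 > 0" using e by simp
  have "\<forall>e>0. \<exists>d>0. \<forall>y. norm (y - x) < d \<longrightarrow> norm (G y - G x - G' (y - x)) \<le> e * norm (y - x)"
    using G'[unfolded has_derivative_at_alt] by blast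
  then obtain d1 where d1: "d1 > 0" "\<forall>y. norm (y - x) < d1 \<longrightarrow> norm (G y - G x - G' (y - x)) \<le> (e/3) * norm (y - x)"
    using e3 by blast
  obtain r where r: "r > 0" "ball x r \<subseteq> U" using U open_contains_ball by blast
  define d where "d = min (d1/2) (r/2)"
  have "d > 0" using d1 r d_def by simp
  moreover have "\<forall>h. 0 < h \<and> h < d \<longrightarrow>
     \<bar>(f (x + h *\<^sub>R ea + h *\<^sub>R eb) - f (x + h *\<^sub>R ea) - f (x + h *\<^sub>R eb) + f x)
       - h^2 * pd b G x\<bar> \<le> e * h^2"
  proof (intro allI impI)
    fix h :: real assume h: "0 < h \<and> h < d"
    have inU: "x + t *\<^sub>R ea + s *\<^sub>R eb \<in> U" if "0 \<le> t" "t \<le> h" "0 \<le> s" "s \<le> h" for t s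
    proof -
      have "norm (t *\<^sub>R ea + s *\<^sub>R eb) \<le> norm (t *\<^sub>R ea) + norm (s *\<^sub>R eb)" by (rule norm_triangle_ineq)
      also have "\<dots> = t + s" using that by (simp add: ea_def eb_def)
      finally have "norm (t *\<^sub>R ea + s *\<^sub>R eb) < r" using that h d_def by linarith
      moreover have "dist x (x + (t *\<^sub>R ea + s *\<^sub>R eb)) = norm (t *\<^sub>R ea + s *\<^sub>R eb)"
        by (metis add_diff_cancel_left' dist_commute dist_norm)
      ultimately have "x + (t *\<^sub>R ea + s *\<^sub>R eb) \<in> ball x r" by simp
      then show ?thesis using r by (auto simp: add.assoc)
    qed
    define \<phi> where "\<phi> t = f (x + h *\<^sub>R eb + t *\<^sub>R ea) - f (x + t *\<^sub>R ea)" for t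
    have der: "DERIV \<phi> t :> (G (x + h *\<^sub>R eb + t *\<^sub>R ea) - G (x + t *\<^sub>R ea))" if "0 \<le> t" "t \<le> h" for t
    proof -
      have eqp: "x + t *\<^sub>R ea + h *\<^sub>R eb = (x + h *\<^sub>R eb) + t *\<^sub>R ea" by (simp add: algebra_simps)
      have "f differentiable (at ((x + h *\<^sub>R eb) + t *\<^sub>R ea))"
        using inU[of t h] that h fd U(1) eqp by (auto simp: differentiable_on_eq_differentiable_at)
      then have 0: "((\<lambda>s. f ((x + h *\<^sub>R eb) + s *\<^sub>R ea)) has_real_derivative G ((x + h *\<^sub>R eb) + t *\<^sub>R ea)) (at t)"
        using line_deriv[of f "x + h *\<^sub>R eb" t a] unfolding ea_def G_def by simp

      have "f differentiable (at (x + t *\<^sub>R ea))"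
        using inU[of t 0] that h fd U(1) by (auto simp: differentiable_on_eq_differentiable_at)
      then have 2: "((\<lambda>s. f (x + s *\<^sub>R ea)) has_real_derivative G (x + t *\<^sub>R ea)) (at t)"
        using line_deriv[of f x t a] ea_def G_def by simp
      from DERIV_diff[OF 0 2] show ?thesis unfolding \<phi>_def[abs_def] by simp
    qed
    obtain z where z: "0 < z" "z < h" "\<phi> h - \<phi> 0 = (h - 0) * (G (x + h *\<^sub>R eb + z *\<^sub>R ea) - G (x + z *\<^sub>R ea))"
      using MVT2[of 0 h \<phi>, OF _ der] h by auto
    define p1 where "p1 = x + h *\<^sub>R eb + z *\<^sub>R ea"
    define p2 where "p2 = x + z *\<^sub>R ea"
    have n1: "norm (p1 - x) \<le> z + h"
    proof -
      have "norm (p1 - x) = norm (z *\<^sub>R ea + h *\<^sub>R eb)" by (simp add: p1_def algebra_simps)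
      also have "\<dots> \<le> norm (z *\<^sub>R ea) + norm (h *\<^sub>R eb)" by (rule norm_triangle_ineq)
      also have "\<dots> = z + h" using z h by (simp add: ea_def eb_def)
      finally show ?thesis .
    qed
    have n2: "norm (p2 - x) = z" using z by (simp add: p2_def ea_def)
    have "d \<le> d1/2" using d_def by simp
    then have "norm (p1 - x) < d1" using n1 z h by linarith
    then have b1: "\<bar>G p1 - G x - G' (p1 - x)\<bar> \<le> (e/3) * norm (p1 - x)"
      using d1(2) by (metis real_norm_def)
    have "norm (p2 - x) < d1" using n2 z h \<open>d \<le> d1/2\<close> d1(1) by linarith
    then have b2: "\<bar>G p2 - G x - G' (p2 - x)\<bar> \<le> (e/3) * norm (p2 - x)"
      using d1(2) by (metis real_norm_def)
    have "G' (p1 - x) - G' (p2 - x) = G' (p1 - p2)" using lin by (simp add: linear_diff)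
    also have "p1 - p2 = h *\<^sub>R eb" by (simp add: p1_def p2_def)
    also have "G' (h *\<^sub>R eb) = h * G' eb" using lin by (simp add: linear_scale)
    finally have lineq: "G' (p1 - x) - G' (p2 - x) = h * pd b G x" using pdG by simp
    have "\<bar>(G p1 - G p2) - h * pd b G x\<bar> \<le> (e/3) * norm (p1 - x) + (e/3) * norm (p2 - x)"
      using b1 b2 lineq by linarith
    also have "\<dots> \<le> (e/3) * (z + h) + (e/3) * z" using n1 n2 e by (intro add_mono mult_left_mono) auto
    also have "\<dots> \<le> e * h" using z e by (simp add: field_simps)
    finally have est: "\<bar>(G p1 - G p2) - h * pd b G x\<bar> \<le> e * h" .
    have eqq: "x + h *\<^sub>R eb + h *\<^sub>R ea = x + h *\<^sub>R ea + h *\<^sub>R eb" by (simp add: algebra_simps)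
    have "\<phi> h - \<phi> 0 = f (x + h *\<^sub>R ea + h *\<^sub>R eb) - f (x + h *\<^sub>R ea) - f (x + h *\<^sub>R eb) + f x"
      by (simp add: \<phi>_def, metis eqq)
    then have Deq: "f (x + h *\<^sub>R ea + h *\<^sub>R eb) - f (x + h *\<^sub>R ea) - f (x + h *\<^sub>R eb) + f x = h * (G p1 - G p2)"
      using z(3) by (simp add: p1_def p2_def)
    have "\<bar>(f (x + h *\<^sub>R ea + h *\<^sub>R eb) - f (x + h *\<^sub>R ea) - f (x + h *\<^sub>R eb) + f x) - h^2 * pd b G x\<bar>
       = \<bar>h * ((G p1 - G p2) - h * pd b G x)\<bar>"
      unfolding Deq by (simp add: power2_eq_square right_diff_distrib mult.assoc)
    also have "\<dots> = h * \<bar>(G p1 - G p2) - h * pd b G x\<bar>" using h by (simp add: abs_mult)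
    also have "\<dots> \<le> h * (e * h)" using est h by (simp add: mult_left_mono)
    finally show "\<bar>(f (x + h *\<^sub>R ea + h *\<^sub>R eb) - f (x + h *\<^sub>R ea) - f (x + h *\<^sub>R eb) + f x) - h^2 * pd b G x\<bar> \<le> e * h^2"
      by (simp add: power2_eq_square mult.commute mult.left_commute)
  qed
  ultimately show ?thesis unfolding G_def ea_def eb_def by blast
qed

lemma schwarz:
  fixes f :: "real^'n::finite \<Rightarrow> real"
  assumes U: "open U" "x \<in> U" and fd: "f differentiable_on U"
    and Ga: "pd a f differentiable (at x)" and Gb: "pd b f differentiable (at x)"
  shows "pd b (pd a f) x = pd a (pd b f) x"
proof (rule ccontr)
  assume ne: "pd b (pd a f) x \<noteq> pd a (pd b f) x"
  define e where "e = \<bar>pd b (pd a f) x - pd a (pd b f) x\<bar> / 4"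
  have e: "e > 0" using ne e_def by simp
  obtain d1 where d1: "d1 > 0" "\<forall>h. 0 < h \<and> h < d1 \<longrightarrow>
     \<bar>(f (x + h *\<^sub>R axis a 1 + h *\<^sub>R axis b 1) - f (x + h *\<^sub>R axis a 1) - f (x + h *\<^sub>R axis b 1) + f x)
       - h^2 * pd b (pd a f) x\<bar> \<le> e * h^2"
    using schwarz_half[OF U fd Ga e] by blast
  obtain d2 where d2: "d2 > 0" "\<forall>h. 0 < h \<and> h < d2 \<longrightarrow>
     \<bar>(f (x + h *\<^sub>R axis b 1 + h *\<^sub>R axis a 1) - f (x + h *\<^sub>R axis b 1) - f (x + h *\<^sub>R axis a 1) + f x)
       - h^2 * pd a (pd b f) x\<bar> \<le> e * h^2"
    using schwarz_half[OF U fd Gb e] by blast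
  define h where "h = min d1 d2 / 2"
  have h: "0 < h" "h < d1" "h < d2" using d1 d2 h_def by auto
  have eq: "x + h *\<^sub>R axis b 1 + h *\<^sub>R axis a 1 = x + h *\<^sub>R axis a 1 + h *\<^sub>R axis b 1" by (simp add: algebra_simps)
  have "\<bar>h^2 * pd b (pd a f) x - h^2 * pd a (pd b f) x\<bar> \<le> 2 * e * h^2"
    using d1(2)[rule_format, of h] d2(2)[rule_format, of h] h unfolding eq by linarith
  then have "h^2 * \<bar>pd b (pd a f) x - pd a (pd b f) x\<bar> \<le> h^2 * (2 * e)"
    by (simp add: abs_mult right_diff_distrib[symmetric] mult.commute mult.left_commute)
  then have "\<bar>pd b (pd a f) x - pd a (pd b f) x\<bar> \<le> 2 * e" using h by simp
  then have "4 * e \<le> 2 * e" using e_def by simp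
  then show False using e by linarith
qed

lemma schwarz_smooth:
  fixes f :: "real^'n::finite \<Rightarrow> real"
  assumes "open U" "x \<in> U" "smooth_fun U f"
  shows "pd b (pd a f) x = pd a (pd b f) x"
  using assms by (intro schwarz[of U]) (auto intro: smooth_diffon smooth_diffat smooth_pd)


lemma smooth_det:
  assumes "open U" "\<And>i j. smooth_fun U (\<lambda>y. A y $ i $ j)"
  shows "smooth_fun U (\<lambda>y. det (A y :: real^'n::finite^'n))"
  unfolding det_def
  by (intro smooth_sum smooth_mult smooth_prod assms finite_permutations finite_class.finite_UNIV smooth_const)

lemma if10_mult: "(if P then 1 else 0) * (x::real) = (if P then x else 0)" by simp

lemma smooth_if_const: "smooth_fun U f \<Longrightarrow> smooth_fun U h \<Longrightarrow> smooth_fun U (\<lambda>y. if P then f y else h y)"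
  by (cases P) auto

lemma gpt_sum: "gpt g y u v = (\<Sum>i\<in>UNIV. \<Sum>j\<in>UNIV. u $ i * g y $ i $ j * v $ j)"
  by (simp add: gpt_def inner_vec_def matrix_vector_mult_def sum_distrib_left mult.assoc)

locale cm =
  fixes U :: "(real^'n::finite) set" and eta xi :: "real^'n \<Rightarrow> real^'n" and phi g :: "real^'n \<Rightarrow> real^'n^'n"
  assumes CMS: "contact_metric_structure U eta xi phi g"
begin

lemma openU: "open U" using CMS unfolding contact_metric_structure_def by blast
lemma sm_eta: "smooth_vf U eta" using CMS unfolding contact_metric_structure_def by blast
lemma sm_xi: "smooth_vf U xi" using CMS unfolding contact_metric_structure_def by blast
lemma sm_phi: "smooth_tf U phi" using CMS unfolding contact_metric_structure_def by blast
lemma sm_g: "smooth_tf U g" using CMS unfolding contact_metric_structure_def by blast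
lemma g_tr: "y \<in> U \<Longrightarrow> transpose (g y) = g y" using CMS unfolding contact_metric_structure_def by blast
lemma g_pos: "y \<in> U \<Longrightarrow> v \<noteq> 0 \<Longrightarrow> gpt g y v v > 0" using CMS unfolding contact_metric_structure_def by blast
lemma eta_xi: "y \<in> U \<Longrightarrow> eta y \<bullet> xi y = 1" using CMS unfolding contact_metric_structure_def by blast
lemma reeb: "y \<in> U \<Longrightarrow> deta_pt eta y (xi y) v = 0" using CMS unfolding contact_metric_structure_def by blast
lemma phi2: "y \<in> U \<Longrightarrow> phi y *v (phi y *v v) = - v + (eta y \<bullet> v) *\<^sub>R xi y" using CMS unfolding contact_metric_structure_def by blast
lemma phi_xi: "y \<in> U \<Longrightarrow> phi y *v xi y = 0" using CMS unfolding contact_metric_structure_def by blast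
lemma compat: "y \<in> U \<Longrightarrow> gpt g y (phi y *v u) (phi y *v v) = gpt g y u v - (eta y \<bullet> u) * (eta y \<bullet> v)"
  using CMS unfolding contact_metric_structure_def by blast
lemma deta_g: "y \<in> U \<Longrightarrow> deta_pt eta y u v = 2 * gpt g y u (phi y *v v)"
  using CMS unfolding contact_metric_structure_def by blast

lemma g_sym: "y \<in> U \<Longrightarrow> g y $ j $ i = g y $ i $ j"
  using g_tr[of y] by (metis transpose_def vec_lambda_beta)

lemma sm_g_entry: "smooth_fun U (\<lambda>y. g y $ i $ j)" using sm_g unfolding smooth_tf_def by blast
lemma sm_phi_entry: "smooth_fun U (\<lambda>y. phi y $ i $ j)" using sm_phi unfolding smooth_tf_def by blast
lemma sm_xi_entry: "smooth_fun U (\<lambda>y. xi y $ i)" using sm_xi unfolding smooth_vf_def by blast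
lemma sm_eta_entry: "smooth_fun U (\<lambda>y. eta y $ i)" using sm_eta unfolding smooth_vf_def by blast

lemma pd_g_sym: "y \<in> U \<Longrightarrow> pd l (\<lambda>z. g z $ j $ i) y = pd l (\<lambda>z. g z $ i $ j) y"
  by (rule pd_local[OF openU]) (auto simp: g_sym)

lemma g_inj: "y \<in> U \<Longrightarrow> g y *v v = 0 \<Longrightarrow> v = 0"
  using g_pos[of y v] by (auto simp: gpt_def)

lemma g_invertible: "y \<in> U \<Longrightarrow> invertible (g y)"
  using g_inj matrix_left_invertible_ker invertible_left_inverse by metis

lemma ginv: assumes "y \<in> U"
  shows "g y ** matrix_inv (g y) = mat 1" "matrix_inv (g y) ** g y = mat 1"
proof -
  have "\<exists>A'. g y ** A' = mat 1 \<and> A' ** g y = mat 1" using g_invertible[OF assms] unfolding invertible_def .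
  then have "g y ** matrix_inv (g y) = mat 1 \<and> matrix_inv (g y) ** g y = mat 1"
    unfolding matrix_inv_def by (rule someI_ex)
  then show "g y ** matrix_inv (g y) = mat 1" "matrix_inv (g y) ** g y = mat 1" by auto
qed

lemma ginv_sum: "y \<in> U \<Longrightarrow> (\<Sum>m\<in>UNIV. g y $ b $ m * matrix_inv (g y) $ m $ l) = (if b = l then 1 else 0)"
  using ginv(1)[of y] by (simp add: matrix_matrix_mult_def mat_def vec_eq_iff)

lemma det_g_nz: "y \<in> U \<Longrightarrow> det (g y) \<noteq> 0"
  using g_invertible invertible_det_nz by blast

lemma ginv_cramer:
  assumes y: "y \<in> U"
  shows "matrix_inv (g y) $ k $ l =
    det (\<chi> i j. if j = k then (if i = l then 1 else 0) else g y $ i $ j) / det (g y)"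
proof -
  let ?B = "matrix_inv (g y)"
  let ?b = "(\<chi> i. if i = l then 1 else 0) :: real^'n"
  have "g y *v (\<chi> k. ?B $ k $ l) = ?b"
    using ginv(1)[OF y] by (simp add: matrix_vector_mult_def matrix_matrix_mult_def vec_eq_iff mat_def)
  then have "(\<chi> k. ?B $ k $ l) = (\<chi> k. det (\<chi> i j. if j = k then ?b $ i else g y $ i $ j) / det (g y))"
    using cramer[OF det_g_nz[OF y]] by blast
  moreover have "\<And>k. (\<chi> i j. if j = k then ?b $ i else g y $ i $ j) = (\<chi> i j. if j = k then (if i = l then 1 else 0) else g y $ i $ j)"
    by (simp add: vec_eq_iff)
  ultimately have "(\<chi> k. ?B $ k $ l) = (\<chi> k. det (\<chi> i j. if j = k then (if i = l then 1 else 0) else g y $ i $ j) / det (g y))"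
    by simp
  then show ?thesis by (metis (no_types, lifting) vec_lambda_beta)
qed

lemma sm_ginv: "smooth_fun U (\<lambda>y. matrix_inv (g y) $ k $ l)"
proof (rule smooth_equ[OF openU])
  show "smooth_fun U (\<lambda>y. det (\<chi> i j. if j = k then (if i = l then 1 else 0) else g y $ i $ j) * inverse (det (g y)))"
    by (intro smooth_mult[OF openU] smooth_inverse[OF openU] smooth_det[OF openU] det_g_nz)
       (auto simp: sm_g_entry intro!: smooth_if_const)
  show "\<And>y. y \<in> U \<Longrightarrow> matrix_inv (g y) $ k $ l =
     det (\<chi> i j. if j = k then (if i = l then 1 else 0) else g y $ i $ j) * inverse (det (g y))"
    by (simp add: ginv_cramer divide_inverse)
qed

lemma sm_chris: "smooth_fun U (\<lambda>y. christoffel g y k i j)"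
  unfolding christoffel_def
  by (intro smooth_mult[OF openU] smooth_sum[OF openU] smooth_add[OF openU] smooth_diff[OF openU]
        smooth_pd sm_g_entry sm_ginv smooth_const finite_class.finite_UNIV)

lemma chris_sym: "y \<in> U \<Longrightarrow> christoffel g y k i j = christoffel g y k j i"
  unfolding christoffel_def using pd_g_sym[of y _ i j] by (simp add: algebra_simps)

lemma chris_lower: "y \<in> U \<Longrightarrow> (\<Sum>m\<in>UNIV. g y $ b $ m * christoffel g y m i a) =
   (1/2) * (pd i (\<lambda>z. g z $ a $ b) y + pd a (\<lambda>z. g z $ i $ b) y - pd b (\<lambda>z. g z $ i $ a) y)"
proof -
  assume y: "y \<in> U"
  let ?L = "\<lambda>l. pd i (\<lambda>z. g z $ a $ l) y + pd a (\<lambda>z. g z $ i $ l) y - pd l (\<lambda>z. g z $ i $ a) y"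
  have "(\<Sum>m\<in>UNIV. g y $ b $ m * christoffel g y m i a) =
      (1/2) * (\<Sum>m\<in>UNIV. \<Sum>l\<in>UNIV. g y $ b $ m * matrix_inv (g y) $ m $ l * ?L l)"
    unfolding christoffel_def by (simp add: sum_distrib_left sum_distrib_right mult.assoc mult.left_commute)
  also have "\<dots> = (1/2) * (\<Sum>l\<in>UNIV. (\<Sum>m\<in>UNIV. g y $ b $ m * matrix_inv (g y) $ m $ l) * ?L l)"
    by (subst sum.swap) (simp add: sum_distrib_right)
  also have "\<dots> = (1/2) * (\<Sum>l\<in>UNIV. (if b = l then ?L l else 0))"
    by (simp only: ginv_sum[OF y] if10_mult)
  also have "\<dots> = (1/2) * ?L b"
    by simp
  finally show ?thesis .
qed

lemma metric_chris: "y \<in> U \<Longrightarrow> pd i (\<lambda>z. g z $ a $ b) y =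
   (\<Sum>m\<in>UNIV. g y $ m $ b * christoffel g y m i a) + (\<Sum>m\<in>UNIV. g y $ a $ m * christoffel g y m i b)"
proof -
  assume y: "y \<in> U"
  have "(\<Sum>m\<in>UNIV. g y $ m $ b * christoffel g y m i a) = (\<Sum>m\<in>UNIV. g y $ b $ m * christoffel g y m i a)"
    using g_sym[OF y] by simp
  also have "\<dots> = (1/2) * (pd i (\<lambda>z. g z $ a $ b) y + pd a (\<lambda>z. g z $ i $ b) y - pd b (\<lambda>z. g z $ i $ a) y)"
    by (rule chris_lower[OF y])
  finally have 1: "(\<Sum>m\<in>UNIV. g y $ m $ b * christoffel g y m i a) = \<dots>" .
  have 2: "(\<Sum>m\<in>UNIV. g y $ a $ m * christoffel g y m i b) =
     (1/2) * (pd i (\<lambda>z. g z $ b $ a) y + pd b (\<lambda>z. g z $ i $ a) y - pd a (\<lambda>z. g z $ i $ b) y)"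
    by (rule chris_lower[OF y])
  show ?thesis unfolding 1 2 using pd_g_sym[OF y, of i a b] by (simp add: field_simps)
qed

end


definition jac :: "(real^'n::finite \<Rightarrow> real^'n) \<Rightarrow> real^'n \<Rightarrow> real^'n^'n" where
  "jac Y y = (\<chi> k i. pd i (\<lambda>z. Y z $ k) y)"

definition cjac :: "(real^'n::finite \<Rightarrow> real^'n^'n) \<Rightarrow> (real^'n \<Rightarrow> real^'n) \<Rightarrow> real^'n \<Rightarrow> real^'n^'n" where
  "cjac g Y y = (\<chi> k i. pd i (\<lambda>z. Y z $ k) y + (\<Sum>j\<in>UNIV. christoffel g y k i j * Y y $ j))"

lemma vdirD_jac: "vdirD X Y y = jac Y y *v X y"
  by (simp add: vdirD_def dirD_def jac_def matrix_vector_mult_def mult.commute)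

lemma lie_jac: "lie X Y y = jac Y y *v X y - jac X y *v Y y"
  by (simp add: lie_def vdirD_jac)

lemma nabla_cjac: "nabla g X Y y = cjac g Y y *v X y"
proof -
  have "\<And>k. nabla g X Y y $ k = (cjac g Y y *v X y) $ k"
  proof -
    fix k
    have "nabla g X Y y $ k = (\<Sum>i\<in>UNIV. X y $ i * pd i (\<lambda>z. Y z $ k) y) + (\<Sum>i\<in>UNIV. \<Sum>j\<in>UNIV. christoffel g y k i j * X y $ i * Y y $ j)"
      by (simp add: nabla_def vdirD_def dirD_def)
    also have "\<dots> = (\<Sum>i\<in>UNIV. (pd i (\<lambda>z. Y z $ k) y + (\<Sum>j\<in>UNIV. christoffel g y k i j * Y y $ j)) * X y $ i)"
      by (simp add: sum.distrib algebra_simps sum_distrib_left sum_distrib_right)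
    also have "\<dots> = (cjac g Y y *v X y) $ k"
      by (simp add: cjac_def matrix_vector_mult_def)
    finally show "nabla g X Y y $ k = (cjac g Y y *v X y) $ k" .
  qed
  then show ?thesis by (simp add: vec_eq_iff)
qed

lemma dirD_sum_def: "dirD X f x = (\<Sum>i\<in>UNIV. X x $ i * pd i f x)"
  by (simp add: dirD_def)

context cm begin

abbreviation "sv X \<equiv> smooth_vf U X"

lemma sv_comp: "sv X \<Longrightarrow> smooth_fun U (\<lambda>y. X y $ k)"
  unfolding smooth_vf_def by blast

lemma svI: "(\<And>k. smooth_fun U (\<lambda>y. X y $ k)) \<Longrightarrow> sv X"
  unfolding smooth_vf_def by blast

lemma diffat: "smooth_fun U f \<Longrightarrow> x \<in> U \<Longrightarrow> f differentiable (at x)"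
  by (rule smooth_diffat[OF openU])

lemma sv_diffat: "sv X \<Longrightarrow> x \<in> U \<Longrightarrow> (\<lambda>y. X y $ k) differentiable (at x)"
  by (rule diffat[OF sv_comp])

lemma sm_jac: "sv Y \<Longrightarrow> smooth_fun U (\<lambda>y. jac Y y $ k $ i)"
  unfolding jac_def by (simp add: smooth_pd sv_comp)

lemma sm_cjac: "sv Y \<Longrightarrow> smooth_fun U (\<lambda>y. cjac g Y y $ k $ i)"
  unfolding cjac_def
  by (simp, intro smooth_add[OF openU] smooth_sum[OF openU] smooth_mult[OF openU] smooth_pd sv_comp sm_chris)
     auto

lemma sv_matvec:
  assumes A: "\<And>k i. smooth_fun U (\<lambda>y. A y $ k $ i)" and X: "sv X"
  shows "sv (\<lambda>y. A y *v X y)"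
proof (rule svI)
  fix k
  have "smooth_fun U (\<lambda>y. \<Sum>i\<in>UNIV. A y $ k $ i * X y $ i)"
    by (rule smooth_sum[OF openU]) (auto intro!: smooth_mult[OF openU] A sv_comp[OF X])
  then show "smooth_fun U (\<lambda>y. (A y *v X y) $ k)" by (simp add: matrix_vector_mult_def)
qed

lemma sv_const: "sv (\<lambda>y. c)"
  by (intro svI) simp

lemma sv_add: "sv X \<Longrightarrow> sv Y \<Longrightarrow> sv (\<lambda>y. X y + Y y)"
  by (intro svI, simp, intro smooth_add[OF openU] sv_comp)

lemma sv_diff: "sv X \<Longrightarrow> sv Y \<Longrightarrow> sv (\<lambda>y. X y - Y y)"
  by (intro svI, simp, intro smooth_diff[OF openU] sv_comp)

lemma sv_minus: "sv X \<Longrightarrow> sv (\<lambda>y. - X y)"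
  by (intro svI, simp, intro smooth_minus[OF openU] sv_comp)

lemma sv_scale: "smooth_fun U f \<Longrightarrow> sv X \<Longrightarrow> sv (\<lambda>y. f y *\<^sub>R X y)"
  by (intro svI, simp, intro smooth_mult[OF openU] sv_comp)

lemma sm_inner:
  assumes X: "sv X" and Y: "sv Y"
  shows "smooth_fun U (\<lambda>y. X y \<bullet> Y y)"
proof -
  have "smooth_fun U (\<lambda>y. \<Sum>i\<in>UNIV. X y $ i * Y y $ i)"
    by (rule smooth_sum[OF openU]) (auto intro!: smooth_mult[OF openU] sv_comp[OF X] sv_comp[OF Y])
  then show ?thesis by (simp add: inner_vec_def)
qed

lemma sv_vdirD: "sv X \<Longrightarrow> sv Y \<Longrightarrow> sv (vdirD X Y)"
  unfolding vdirD_jac by (intro sv_matvec sm_jac)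

lemma sv_lie: "sv X \<Longrightarrow> sv Y \<Longrightarrow> sv (lie X Y)"
  unfolding lie_def by (intro sv_diff sv_vdirD)

lemma sv_nabla: "sv X \<Longrightarrow> sv Y \<Longrightarrow> sv (nabla g X Y)"
  unfolding nabla_cjac by (intro sv_matvec sm_cjac)

lemma sv_curv: "sv X \<Longrightarrow> sv Y \<Longrightarrow> sv Z \<Longrightarrow> sv (curv g X Y Z)"
  unfolding curv_def by (intro sv_diff sv_nabla sv_lie)

lemma sv_xi: "sv xi" by (rule sm_xi)
lemma sv_eta: "sv eta" by (rule sm_eta)

lemma sv_phi: "sv X \<Longrightarrow> sv (\<lambda>y. phi y *v X y)"
  by (intro sv_matvec sm_phi_entry)

lemma sm_gmat: "sv X \<Longrightarrow> sv (\<lambda>y. g y *v X y)"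
  by (intro sv_matvec sm_g_entry)

lemma sm_gpt: "sv X \<Longrightarrow> sv Y \<Longrightarrow> smooth_fun U (\<lambda>y. gpt g y (X y) (Y y))"
  unfolding gpt_def by (intro sm_inner sm_gmat)

section \<open>Locality\<close>

lemma dirD_local:
  assumes x: "x \<in> U" and eq: "\<And>y. y \<in> U \<Longrightarrow> f y = h y"
  shows "dirD X f x = dirD X h x"
  unfolding dirD_def using pd_local[OF openU x eq] by simp

lemma jac_local:
  assumes x: "x \<in> U" and eq: "\<And>y. y \<in> U \<Longrightarrow> Y y = Y' y"
  shows "jac Y x = jac Y' x"
proof -
  have "\<And>k i. pd i (\<lambda>z. Y z $ k) x = pd i (\<lambda>z. Y' z $ k) x"
    by (rule pd_local[OF openU x]) (simp add: eq)
  then show ?thesis unfolding jac_def by (simp add: vec_eq_iff)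
qed

lemma cjac_local:
  assumes x: "x \<in> U" and eq: "\<And>y. y \<in> U \<Longrightarrow> Y y = Y' y"
  shows "cjac g Y x = cjac g Y' x"
proof -
  have "\<And>k i. pd i (\<lambda>z. Y z $ k) x = pd i (\<lambda>z. Y' z $ k) x"
    by (rule pd_local[OF openU x]) (simp add: eq)
  moreover have "Y x = Y' x" using eq x by blast
  ultimately show ?thesis unfolding cjac_def by (simp add: vec_eq_iff)
qed

lemma nabla_local:
  assumes x: "x \<in> U" and eq: "\<And>y. y \<in> U \<Longrightarrow> Y y = Y' y"
  shows "nabla g X Y x = nabla g X Y' x"
  unfolding nabla_cjac using cjac_local[OF x eq] by simp

lemma vdirD_local:
  assumes x: "x \<in> U" and eq: "\<And>y. y \<in> U \<Longrightarrow> Y y = Y' y"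
  shows "vdirD X Y x = vdirD X Y' x"
  unfolding vdirD_jac using jac_local[OF x eq] by simp

section \<open>Derivation rules\<close>

lemma dirD_add: "f differentiable (at x) \<Longrightarrow> h differentiable (at x) \<Longrightarrow>
   dirD X (\<lambda>y. f y + h y) x = dirD X f x + dirD X h x"
  unfolding dirD_def by (simp add: pd_add sum.distrib algebra_simps)

lemma dirD_diff: "f differentiable (at x) \<Longrightarrow> h differentiable (at x) \<Longrightarrow>
   dirD X (\<lambda>y. f y - h y) x = dirD X f x - dirD X h x"
  unfolding dirD_def by (simp add: pd_diff sum_subtractf algebra_simps)

lemma dirD_mult: "f differentiable (at x) \<Longrightarrow> h differentiable (at x) \<Longrightarrow>
   dirD X (\<lambda>y. f y * h y) x = dirD X f x * h x + f x * dirD X h x"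
  unfolding dirD_def by (simp add: pd_mult sum.distrib sum_distrib_left sum_distrib_right algebra_simps)

lemma dirD_const[simp]: "dirD X (\<lambda>y. c) x = 0"
  unfolding dirD_def by simp

lemma dirD_cmult: "f differentiable (at x) \<Longrightarrow> dirD X (\<lambda>y. c * f y) x = c * dirD X f x"
  unfolding dirD_def by (simp add: pd_cmult sum_distrib_left algebra_simps)

lemma dirD_sum: "finite S \<Longrightarrow> (\<And>a. a \<in> S \<Longrightarrow> f a differentiable (at x)) \<Longrightarrow>
   dirD X (\<lambda>y. \<Sum>a\<in>S. f a y) x = (\<Sum>a\<in>S. dirD X (f a) x)"
  unfolding dirD_def by (simp add: pd_sum sum_distrib_left) (rule sum.swap)

lemma dirD_inner:
  assumes "sv A" "sv B" "x \<in> U"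
  shows "dirD X (\<lambda>y. A y \<bullet> B y) x = vdirD X A x \<bullet> B x + A x \<bullet> vdirD X B x"
proof -
  have "dirD X (\<lambda>y. A y \<bullet> B y) x = dirD X (\<lambda>y. \<Sum>k\<in>UNIV. A y $ k * B y $ k) x"
    by (simp add: inner_vec_def)
  also have "\<dots> = (\<Sum>k\<in>UNIV. dirD X (\<lambda>y. A y $ k * B y $ k) x)"
    using assms by (intro dirD_sum) (auto intro!: differentiable_mult sv_diffat)
  also have "\<dots> = (\<Sum>k\<in>UNIV. dirD X (\<lambda>y. A y $ k) x * B x $ k + A x $ k * dirD X (\<lambda>y. B y $ k) x)"
    using assms by (intro sum.cong refl dirD_mult sv_diffat)
  also have "\<dots> = vdirD X A x \<bullet> B x + A x \<bullet> vdirD X B x"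
    by (simp add: vdirD_def inner_vec_def sum.distrib mult.commute)
  finally show ?thesis .
qed

lemma vdirD_add: "sv A \<Longrightarrow> sv B \<Longrightarrow> x \<in> U \<Longrightarrow> vdirD X (\<lambda>y. A y + B y) x = vdirD X A x + vdirD X B x"
  unfolding vdirD_def by (simp add: vec_eq_iff dirD_add sv_diffat)

lemma vdirD_diff: "sv A \<Longrightarrow> sv B \<Longrightarrow> x \<in> U \<Longrightarrow> vdirD X (\<lambda>y. A y - B y) x = vdirD X A x - vdirD X B x"
  unfolding vdirD_def by (simp add: vec_eq_iff dirD_diff sv_diffat)

lemma vdirD_const[simp]: "vdirD X (\<lambda>y. c) x = 0"
  unfolding vdirD_def by (simp add: vec_eq_iff)

lemma vdirD_minus: "sv A \<Longrightarrow> x \<in> U \<Longrightarrow> vdirD X (\<lambda>y. - A y) x = - vdirD X A x"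
  using vdirD_diff[of "\<lambda>y. 0" A x X] sv_const by simp


lemma jac_const[simp]: "jac (\<lambda>y. c) x = 0"
  unfolding jac_def by (simp add: vec_eq_iff)

lemma lie_const[simp]: "lie (\<lambda>y. u) (\<lambda>y. v) x = 0"
  unfolding lie_def by simp

end


definition HH :: "(real^'n::finite \<Rightarrow> real^'n^'n) \<Rightarrow> (real^'n \<Rightarrow> real^'n) \<Rightarrow> real^'n \<Rightarrow> 'n \<Rightarrow> 'n \<Rightarrow> 'n \<Rightarrow> real" where
  "HH g Z x k i b = pd i (\<lambda>y. cjac g Z y $ k $ b) x + (\<Sum>j\<in>UNIV. christoffel g x k i j * cjac g Z x $ j $ b)"

definition Rc :: "(real^'n::finite \<Rightarrow> real^'n^'n) \<Rightarrow> real^'n \<Rightarrow> 'n \<Rightarrow> 'n \<Rightarrow> 'n \<Rightarrow> 'n \<Rightarrow> real" where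
  "Rc g x k i b l = pd i (\<lambda>y. christoffel g y k b l) x - pd b (\<lambda>y. christoffel g y k i l) x
     + (\<Sum>m\<in>UNIV. christoffel g x k i m * christoffel g x m b l - christoffel g x k b m * christoffel g x m i l)"

definition Rm :: "(real^'n::finite \<Rightarrow> real^'n^'n) \<Rightarrow> real^'n \<Rightarrow> real^'n \<Rightarrow> real^'n \<Rightarrow> real^'n \<Rightarrow> real^'n" where
  "Rm g x u v w = (\<chi> k. \<Sum>i\<in>UNIV. \<Sum>b\<in>UNIV. \<Sum>l\<in>UNIV. Rc g x k i b l * u $ i * v $ b * w $ l)"

context cm begin

lemma nn:
  assumes X: "sv X" and Y: "sv Y" and Z: "sv Z" and x: "x \<in> U"
  shows "nabla g X (nabla g Y Z) x =
     (\<chi> k. \<Sum>i\<in>UNIV. \<Sum>b\<in>UNIV. X x $ i * Y x $ b * HH g Z x k i b) + cjac g Z x *v vdirD X Y x"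
proof -
  have "nabla g X (nabla g Y Z) x $ k =
     ((\<chi> k. \<Sum>i\<in>UNIV. \<Sum>b\<in>UNIV. X x $ i * Y x $ b * HH g Z x k i b) + cjac g Z x *v vdirD X Y x) $ k" for k
  proof -
    have W: "(\<lambda>y. nabla g Y Z y $ k') = (\<lambda>y. \<Sum>b\<in>UNIV. cjac g Z y $ k' $ b * Y y $ b)" for k'
      by (simp add: nabla_cjac matrix_vector_mult_def)
    have pdW: "pd i (\<lambda>y. nabla g Y Z y $ k) x =
       (\<Sum>b\<in>UNIV. pd i (\<lambda>y. cjac g Z y $ k $ b) x * Y x $ b + cjac g Z x $ k $ b * pd i (\<lambda>y. Y y $ b) x)" for i
    proof -
      have d1: "\<And>k b. (\<lambda>y. cjac g Z y $ k $ b) differentiable (at x)" by (rule diffat[OF sm_cjac[OF Z] x])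
      have d2: "\<And>b. (\<lambda>y. Y y $ b) differentiable (at x)" by (rule sv_diffat[OF Y x])
      show ?thesis unfolding W by (subst pd_sum) (auto simp: pd_mult d1 d2)
    qed
    have "nabla g X (nabla g Y Z) x $ k = (\<Sum>i\<in>UNIV. cjac g (nabla g Y Z) x $ k $ i * X x $ i)"
      by (simp add: nabla_cjac matrix_vector_mult_def)
    also have "\<dots> = (\<Sum>i\<in>UNIV. ((\<Sum>b\<in>UNIV. pd i (\<lambda>y. cjac g Z y $ k $ b) x * Y x $ b + cjac g Z x $ k $ b * pd i (\<lambda>y. Y y $ b) x)
         + (\<Sum>j\<in>UNIV. christoffel g x k i j * (\<Sum>b\<in>UNIV. cjac g Z x $ j $ b * Y x $ b))) * X x $ i)"
    proof -
      have cW: "\<And>i. cjac g (nabla g Y Z) x $ k $ i = pd i (\<lambda>y. nabla g Y Z y $ k) x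
           + (\<Sum>j\<in>UNIV. christoffel g x k i j * nabla g Y Z x $ j)"
        by (simp add: cjac_def)
      have Wx: "\<And>j. nabla g Y Z x $ j = (\<Sum>b\<in>UNIV. cjac g Z x $ j $ b * Y x $ b)"
        by (simp add: nabla_cjac matrix_vector_mult_def)
      show ?thesis by (simp only: cW pdW Wx)
    qed
    also have "\<dots> = (\<Sum>i\<in>UNIV. \<Sum>b\<in>UNIV. X x $ i * Y x $ b * pd i (\<lambda>y. cjac g Z y $ k $ b) x)
        + (\<Sum>i\<in>UNIV. \<Sum>b\<in>UNIV. cjac g Z x $ k $ b * pd i (\<lambda>y. Y y $ b) x * X x $ i)
        + (\<Sum>i\<in>UNIV. \<Sum>j\<in>UNIV. \<Sum>b\<in>UNIV. X x $ i * Y x $ b * (christoffel g x k i j * cjac g Z x $ j $ b))"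
      by (simp add: sum.distrib sum_distrib_left sum_distrib_right algebra_simps)
    also have "(\<Sum>i\<in>UNIV. \<Sum>j\<in>UNIV. \<Sum>b\<in>UNIV. X x $ i * Y x $ b * (christoffel g x k i j * cjac g Z x $ j $ b))
       = (\<Sum>i\<in>UNIV. \<Sum>b\<in>UNIV. \<Sum>j\<in>UNIV. X x $ i * Y x $ b * (christoffel g x k i j * cjac g Z x $ j $ b))"
      by (rule sum.cong[OF refl], rule sum.swap)
    also have "(\<Sum>i\<in>UNIV. \<Sum>b\<in>UNIV. cjac g Z x $ k $ b * pd i (\<lambda>y. Y y $ b) x * X x $ i)
       = (\<Sum>b\<in>UNIV. \<Sum>i\<in>UNIV. cjac g Z x $ k $ b * pd i (\<lambda>y. Y y $ b) x * X x $ i)"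
      by (rule sum.swap)
    also have "(\<Sum>i\<in>UNIV. \<Sum>b\<in>UNIV. X x $ i * Y x $ b * pd i (\<lambda>y. cjac g Z y $ k $ b) x)
        + (\<Sum>b\<in>UNIV. \<Sum>i\<in>UNIV. cjac g Z x $ k $ b * pd i (\<lambda>y. Y y $ b) x * X x $ i)
        + (\<Sum>i\<in>UNIV. \<Sum>b\<in>UNIV. \<Sum>j\<in>UNIV. X x $ i * Y x $ b * (christoffel g x k i j * cjac g Z x $ j $ b))
      = ((\<chi> k. \<Sum>i\<in>UNIV. \<Sum>b\<in>UNIV. X x $ i * Y x $ b * HH g Z x k i b) + cjac g Z x *v vdirD X Y x) $ k"
      by (simp add: HH_def matrix_vector_mult_def vdirD_def dirD_def sum.distrib sum_distrib_left
          sum_distrib_right algebra_simps)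
    finally show ?thesis .
  qed
  then show ?thesis by (simp add: vec_eq_iff)
qed

lemma curv1:
  assumes X: "sv X" and Y: "sv Y" and Z: "sv Z" and x: "x \<in> U"
  shows "curv g X Y Z x = (\<chi> k. \<Sum>i\<in>UNIV. \<Sum>b\<in>UNIV. X x $ i * Y x $ b * (HH g Z x k i b - HH g Z x k b i))"
proof -
  have sw: "(\<Sum>i\<in>UNIV. \<Sum>b\<in>UNIV. Y x $ i * X x $ b * HH g Z x k i b) =
            (\<Sum>i\<in>UNIV. \<Sum>b\<in>UNIV. X x $ i * Y x $ b * HH g Z x k b i)" for k
    by (subst sum.swap) (simp add: mult.commute)
  have "curv g X Y Z x = nabla g X (nabla g Y Z) x - nabla g Y (nabla g X Z) x - cjac g Z x *v lie X Y x"
    by (simp add: curv_def nabla_cjac)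
  also have "\<dots> = (\<chi> k. \<Sum>i\<in>UNIV. \<Sum>b\<in>UNIV. X x $ i * Y x $ b * HH g Z x k i b)
      - (\<chi> k. \<Sum>i\<in>UNIV. \<Sum>b\<in>UNIV. Y x $ i * X x $ b * HH g Z x k i b)"
    unfolding nn[OF X Y Z x] nn[OF Y X Z x] lie_def by (simp add: matrix_vector_mult_diff_distrib)
  also have "\<dots> = (\<chi> k. \<Sum>i\<in>UNIV. \<Sum>b\<in>UNIV. X x $ i * Y x $ b * (HH g Z x k i b - HH g Z x k b i))"
    by (simp add: vec_eq_iff sw sum_subtractf right_diff_distrib)
  finally show ?thesis .
qed

lemma chris_diff: "x \<in> U \<Longrightarrow> (\<lambda>y. christoffel g y k i j) differentiable (at x)"
  by (rule diffat[OF sm_chris])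

lemma HH_expand:
  assumes Z: "sv Z" and x: "x \<in> U"
  shows "HH g Z x k i b = pd i (pd b (\<lambda>z. Z z $ k)) x
     + (\<Sum>j\<in>UNIV. pd i (\<lambda>y. christoffel g y k b j) x * Z x $ j)
     + ((\<Sum>j\<in>UNIV. christoffel g x k b j * pd i (\<lambda>y. Z y $ j) x) + (\<Sum>j\<in>UNIV. christoffel g x k i j * pd b (\<lambda>y. Z y $ j) x))
     + (\<Sum>j\<in>UNIV. \<Sum>l\<in>UNIV. christoffel g x k i j * christoffel g x j b l * Z x $ l)"
proof -
  have d0: "pd b (\<lambda>z. Z z $ k) differentiable (at x)" by (rule diffat[OF smooth_pd[OF sv_comp[OF Z]] x])
  have d2: "\<And>j. (\<lambda>y. Z y $ j) differentiable (at x)" by (rule sv_diffat[OF Z x])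
  have ds: "(\<lambda>y. \<Sum>j\<in>UNIV. christoffel g y k b j * Z y $ j) differentiable (at x)"
    by (intro differentiable_sum ballI differentiable_mult chris_diff[OF x] d2) auto
  have "pd i (\<lambda>y. cjac g Z y $ k $ b) x = pd i (\<lambda>y. pd b (\<lambda>z. Z z $ k) y + (\<Sum>j\<in>UNIV. christoffel g y k b j * Z y $ j)) x"
    by (simp add: cjac_def)
  also have "\<dots> = pd i (pd b (\<lambda>z. Z z $ k)) x + pd i (\<lambda>y. \<Sum>j\<in>UNIV. christoffel g y k b j * Z y $ j) x"
    by (rule pd_add[OF d0 ds])
  also have "pd i (\<lambda>y. \<Sum>j\<in>UNIV. christoffel g y k b j * Z y $ j) x =
      (\<Sum>j\<in>UNIV. pd i (\<lambda>y. christoffel g y k b j) x * Z x $ j + christoffel g x k b j * pd i (\<lambda>y. Z y $ j) x)"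
    by (subst pd_sum) (auto simp: pd_mult chris_diff[OF x] d2)
  finally have 1: "pd i (\<lambda>y. cjac g Z y $ k $ b) x = pd i (pd b (\<lambda>z. Z z $ k)) x +
      (\<Sum>j\<in>UNIV. pd i (\<lambda>y. christoffel g y k b j) x * Z x $ j + christoffel g x k b j * pd i (\<lambda>y. Z y $ j) x)" .
  have 2: "(\<Sum>j\<in>UNIV. christoffel g x k i j * cjac g Z x $ j $ b) =
     (\<Sum>j\<in>UNIV. christoffel g x k i j * pd b (\<lambda>y. Z y $ j) x) + (\<Sum>j\<in>UNIV. \<Sum>l\<in>UNIV. christoffel g x k i j * christoffel g x j b l * Z x $ l)"
    by (simp add: cjac_def sum.distrib sum_distrib_left algebra_simps)
  show ?thesis unfolding HH_def 1 2 by (simp add: sum.distrib algebra_simps)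
qed

lemma HH_antisym:
  assumes Z: "sv Z" and x: "x \<in> U"
  shows "HH g Z x k i b - HH g Z x k b i = (\<Sum>l\<in>UNIV. Rc g x k i b l * Z x $ l)"
proof -
  have sch: "pd i (pd b (\<lambda>z. Z z $ k)) x = pd b (pd i (\<lambda>z. Z z $ k)) x"
    by (rule schwarz_smooth[OF openU x sv_comp[OF Z]])
  have sw: "(\<Sum>j\<in>UNIV. \<Sum>l\<in>UNIV. c j l * Z x $ l) = (\<Sum>l\<in>UNIV. (\<Sum>j\<in>UNIV. c j l) * Z x $ l)" for c
    by (subst sum.swap) (simp add: sum_distrib_right)
  have "HH g Z x k i b - HH g Z x k b i =
     (\<Sum>l\<in>UNIV. pd i (\<lambda>y. christoffel g y k b l) x * Z x $ l) - (\<Sum>l\<in>UNIV. pd b (\<lambda>y. christoffel g y k i l) x * Z x $ l)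
     + ((\<Sum>j\<in>UNIV. \<Sum>l\<in>UNIV. christoffel g x k i j * christoffel g x j b l * Z x $ l)
       - (\<Sum>j\<in>UNIV. \<Sum>l\<in>UNIV. christoffel g x k b j * christoffel g x j i l * Z x $ l))"
    unfolding HH_expand[OF Z x] sch by simp
  also have "\<dots> = (\<Sum>l\<in>UNIV. Rc g x k i b l * Z x $ l)"
    unfolding sw by (simp add: Rc_def sum_subtractf sum.distrib algebra_simps)
  finally show ?thesis .
qed

lemma curv_Rm:
  assumes X: "sv X" and Y: "sv Y" and Z: "sv Z" and x: "x \<in> U"
  shows "curv g X Y Z x = Rm g x (X x) (Y x) (Z x)"
  unfolding curv1[OF X Y Z x] HH_antisym[OF Z x] Rm_def
  by (simp add: vec_eq_iff sum_distrib_left algebra_simps)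

lemma curv_const: "x \<in> U \<Longrightarrow> curv g (\<lambda>_. u) (\<lambda>_. v) (\<lambda>_. w) x = Rm g x u v w"
  using curv_Rm[OF sv_const sv_const sv_const] by simp

lemma Rc_antisym: "Rc g x k b i l = - Rc g x k i b l"
  by (simp add: Rc_def sum_subtractf algebra_simps)

lemma Rm_antisym: "Rm g x v u w = - Rm g x u v w"
proof -
  have "(\<Sum>i\<in>UNIV. \<Sum>b\<in>UNIV. \<Sum>l\<in>UNIV. Rc g x k i b l * v $ i * u $ b * w $ l)
     = - (\<Sum>i\<in>UNIV. \<Sum>b\<in>UNIV. \<Sum>l\<in>UNIV. Rc g x k i b l * u $ i * v $ b * w $ l)" for k
  proof -
    have "(\<Sum>i\<in>UNIV. \<Sum>b\<in>UNIV. \<Sum>l\<in>UNIV. Rc g x k i b l * v $ i * u $ b * w $ l)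
     = (\<Sum>b\<in>UNIV. \<Sum>i\<in>UNIV. \<Sum>l\<in>UNIV. Rc g x k i b l * v $ i * u $ b * w $ l)" by (rule sum.swap)
    also have "\<dots> = (\<Sum>b\<in>UNIV. \<Sum>i\<in>UNIV. \<Sum>l\<in>UNIV. - (Rc g x k b i l * u $ b * v $ i * w $ l))"
      by (intro sum.cong refl) (subst Rc_antisym, simp add: mult.commute mult.left_commute)
    also have "\<dots> = - (\<Sum>i\<in>UNIV. \<Sum>b\<in>UNIV. \<Sum>l\<in>UNIV. Rc g x k i b l * u $ i * v $ b * w $ l)"
      by (simp add: sum_negf)
    finally show ?thesis .
  qed
  then show ?thesis unfolding Rm_def by (simp add: vec_eq_iff)
qed

lemma pd_chris_sym: "x \<in> U \<Longrightarrow> pd p (\<lambda>y. christoffel g y k i j) x = pd p (\<lambda>y. christoffel g y k j i) x"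
  by (rule pd_local[OF openU]) (auto simp: chris_sym)

lemma Rc_bianchi:
  assumes x: "x \<in> U"
  shows "Rc g x k p q r + Rc g x k q r p + Rc g x k r p q = 0"
  unfolding Rc_def using pd_chris_sym[OF x, of _ k q r] pd_chris_sym[OF x, of _ k p r] pd_chris_sym[OF x, of _ k p q]
    chris_sym[OF x, of _ q r] chris_sym[OF x, of _ p r] chris_sym[OF x, of _ p q]
  by (simp add: sum_subtractf sum.distrib[symmetric] algebra_simps)

lemma sum3_rot: "(\<Sum>i\<in>UNIV. \<Sum>b\<in>UNIV. \<Sum>l\<in>UNIV. f i b l) = (\<Sum>l\<in>UNIV. \<Sum>i\<in>UNIV. \<Sum>b\<in>UNIV. f i b l :: real)"
proof -
  have "(\<Sum>i\<in>UNIV. \<Sum>b\<in>UNIV. \<Sum>l\<in>UNIV. f i b l) = (\<Sum>i\<in>UNIV. \<Sum>l\<in>UNIV. \<Sum>b\<in>UNIV. f i b l)"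
    by (intro sum.cong refl sum.swap)
  also have "\<dots> = (\<Sum>l\<in>UNIV. \<Sum>i\<in>UNIV. \<Sum>b\<in>UNIV. f i b l)" by (rule sum.swap)
  finally show ?thesis .
qed

lemma Rm_bianchi:
  assumes x: "x \<in> U"
  shows "Rm g x u v w + Rm g x v w u + Rm g x w u v = 0"
proof -
  have "(\<Sum>i\<in>UNIV. \<Sum>b\<in>UNIV. \<Sum>l\<in>UNIV. Rc g x k i b l * u $ i * v $ b * w $ l)
      + (\<Sum>i\<in>UNIV. \<Sum>b\<in>UNIV. \<Sum>l\<in>UNIV. Rc g x k i b l * v $ i * w $ b * u $ l)
      + (\<Sum>i\<in>UNIV. \<Sum>b\<in>UNIV. \<Sum>l\<in>UNIV. Rc g x k i b l * w $ i * u $ b * v $ l) = 0" for k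
  proof -
    have 2: "(\<Sum>i\<in>UNIV. \<Sum>b\<in>UNIV. \<Sum>l\<in>UNIV. Rc g x k i b l * v $ i * w $ b * u $ l)
        = (\<Sum>p\<in>UNIV. \<Sum>q\<in>UNIV. \<Sum>r\<in>UNIV. Rc g x k q r p * u $ p * v $ q * w $ r)"
      by (subst sum3_rot) (simp add: mult.commute mult.left_commute)
    have 3: "(\<Sum>i\<in>UNIV. \<Sum>b\<in>UNIV. \<Sum>l\<in>UNIV. Rc g x k i b l * w $ i * u $ b * v $ l)
        = (\<Sum>p\<in>UNIV. \<Sum>q\<in>UNIV. \<Sum>r\<in>UNIV. Rc g x k r p q * u $ p * v $ q * w $ r)"
      by (subst sum3_rot, subst sum3_rot) (simp add: mult.commute mult.left_commute)
    have z: "\<And>p q r. (Rc g x k p q r + Rc g x k q r p + Rc g x k r p q) * u $ p * v $ q * w $ r = 0"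
      by (simp add: Rc_bianchi[OF x])
    have "(\<Sum>p\<in>UNIV. \<Sum>q\<in>UNIV. \<Sum>r\<in>UNIV. (Rc g x k p q r + Rc g x k q r p + Rc g x k r p q) * u $ p * v $ q * w $ r) = 0"
      by (simp only: z sum.neutral_const)
    then show ?thesis unfolding 2 3 by (simp add: sum.distrib[symmetric] algebra_simps)
  qed
  then show ?thesis unfolding Rm_def by (simp add: vec_eq_iff)
qed

lemma Rm_add1: "Rm g x (u + u') v w = Rm g x u v w + Rm g x u' v w"
  unfolding Rm_def by (simp add: vec_eq_iff sum.distrib algebra_simps)
lemma Rm_add2: "Rm g x u (v + v') w = Rm g x u v w + Rm g x u v' w"
  unfolding Rm_def by (simp add: vec_eq_iff sum.distrib algebra_simps)
lemma Rm_add3: "Rm g x u v (w + w') = Rm g x u v w + Rm g x u v w'"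
  unfolding Rm_def by (simp add: vec_eq_iff sum.distrib algebra_simps)
lemma Rm_scale1: "Rm g x (c *\<^sub>R u) v w = c *\<^sub>R Rm g x u v w"
  unfolding Rm_def by (simp add: vec_eq_iff sum_distrib_left algebra_simps)
lemma Rm_scale2: "Rm g x u (c *\<^sub>R v) w = c *\<^sub>R Rm g x u v w"
  unfolding Rm_def by (simp add: vec_eq_iff sum_distrib_left algebra_simps)
lemma Rm_scale3: "Rm g x u v (c *\<^sub>R w) = c *\<^sub>R Rm g x u v w"
  unfolding Rm_def by (simp add: vec_eq_iff sum_distrib_left algebra_simps)
lemma Rm_diff1: "Rm g x (u - u') v w = Rm g x u v w - Rm g x u' v w"
  using Rm_add1[of x u "- u'" v w] Rm_scale1[of x "-1" u' v w] by (simp add: algebra_simps)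
lemma Rm_diff2: "Rm g x u (v - v') w = Rm g x u v w - Rm g x u v' w"
  using Rm_add2[of x u v "- v'" w] Rm_scale2[of x u "-1" v' w] by (simp add: algebra_simps)
lemma Rm_diff3: "Rm g x u v (w - w') = Rm g x u v w - Rm g x u v w'"
  using Rm_add3[of x u v w "- w'"] Rm_scale3[of x u v "-1" w'] by (simp add: algebra_simps)

end

definition grad :: "(real^'n::finite \<Rightarrow> real) \<Rightarrow> real^'n \<Rightarrow> real^'n" where
  "grad f y = (\<chi> j. pd j f y)"

definition GamM :: "(real^'n::finite \<Rightarrow> real^'n^'n) \<Rightarrow> real^'n \<Rightarrow> real^'n \<Rightarrow> real^'n^'n" where
  "GamM g y u = (\<chi> m a. \<Sum>i\<in>UNIV. u $ i * christoffel g y m i a)"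

definition dM :: "(real^'n::finite \<Rightarrow> real^'n) \<Rightarrow> (real^'n \<Rightarrow> real^'n^'n) \<Rightarrow> real^'n \<Rightarrow> real^'n^'n" where
  "dM X M x = (\<chi> a b. dirD X (\<lambda>y. M y $ a $ b) x)"

lemma dirD_grad: "dirD X f x = X x \<bullet> grad f x"
  by (simp add: dirD_def grad_def inner_vec_def)

lemma nabla_GamM: "nabla g X Y y = jac Y y *v X y + GamM g y (X y) *v Y y"
proof -
  have "(\<Sum>i\<in>UNIV. \<Sum>j\<in>UNIV. christoffel g y k i j * X y $ i * Y y $ j) =
        (\<Sum>j\<in>UNIV. (\<Sum>i\<in>UNIV. X y $ i * christoffel g y k i j) * Y y $ j)" for k
    by (subst sum.swap) (simp add: sum_distrib_left sum_distrib_right mult.commute mult.left_commute)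
  then show ?thesis
    by (simp add: nabla_def vdirD_jac GamM_def matrix_vector_mult_def vec_eq_iff)
qed

lemma inner_vmul: "(u::real^'n::finite) \<bullet> (w v* A) = (A *v u) \<bullet> w"
  by (metis dot_lmul_matrix inner_commute)

lemma inner_transpose: "(u::real^'n::finite) \<bullet> (transpose A *v w) = (A *v u) \<bullet> w"
  by (metis dot_lmul_matrix inner_commute transpose_matrix_vector)

lemma gpt_add1: "gpt g y (u + u') v = gpt g y u v + gpt g y u' v"
  by (simp add: gpt_def inner_add_left)
lemma gpt_add2: "gpt g y u (v + v') = gpt g y u v + gpt g y u v'"
  by (simp add: gpt_def matrix_vector_right_distrib inner_add_right)
lemma gpt_diff1: "gpt g y (u - u') v = gpt g y u v - gpt g y u' v"
  by (simp add: gpt_def inner_diff_left)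
lemma gpt_diff2: "gpt g y u (v - v') = gpt g y u v - gpt g y u v'"
  by (simp add: gpt_def matrix_vector_mult_diff_distrib inner_diff_right)
lemma gpt_scale1: "gpt g y (c *\<^sub>R u) v = c * gpt g y u v"
  by (simp add: gpt_def)
lemma gpt_scale2: "gpt g y u (c *\<^sub>R v) = c * gpt g y u v"
  by (simp add: gpt_def matrix_vector_mult_scaleR)
lemma gpt_minus1: "gpt g y (- u) v = - gpt g y u v"
  by (simp add: gpt_def)
lemma gpt_minus2: "gpt g y u (- v) = - gpt g y u v"
  using gpt_scale2[of g y u "-1" v] by simp
lemma gpt_zero1[simp]: "gpt g y 0 v = 0" by (simp add: gpt_def)
lemma gpt_zero2[simp]: "gpt g y u 0 = 0" by (simp add: gpt_def)

lemmas gpt_lin = gpt_add1 gpt_add2 gpt_diff1 gpt_diff2 gpt_scale1 gpt_scale2 gpt_minus1 gpt_minus2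

context cm begin

lemma gpt_sym: "y \<in> U \<Longrightarrow> gpt g y u v = gpt g y v u"
proof -
  assume y: "y \<in> U"
  have "(\<Sum>i\<in>UNIV. \<Sum>j\<in>UNIV. u $ i * g y $ i $ j * v $ j) = (\<Sum>j\<in>UNIV. \<Sum>i\<in>UNIV. u $ i * g y $ i $ j * v $ j)"
    by (rule sum.swap)
  also have "\<dots> = (\<Sum>j\<in>UNIV. \<Sum>i\<in>UNIV. v $ j * g y $ j $ i * u $ i)"
    using g_sym[OF y] by (simp add: mult.commute mult.left_commute)
  finally show ?thesis by (simp add: gpt_sum)
qed

lemma sv_grad: "smooth_fun U f \<Longrightarrow> sv (grad f)"
  by (intro svI) (simp add: grad_def smooth_pd)

lemma hess_sym: "smooth_fun U f \<Longrightarrow> x \<in> U \<Longrightarrow> jac (grad f) x $ j $ i = jac (grad f) x $ i $ j"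
  unfolding jac_def grad_def using schwarz_smooth[OF openU] by simp

lemma commutator:
  assumes V: "sv V" and W: "sv W" and f: "smooth_fun U f" and x: "x \<in> U"
  shows "dirD V (dirD W f) x - dirD W (dirD V f) x = dirD (lie V W) f x"
proof -
  let ?H = "jac (grad f) x"
  have 1: "dirD A (dirD B f) x = (?H *v A x) \<bullet> B x + grad f x \<bullet> (jac B x *v A x)" if A: "sv A" and B: "sv B" for A B
  proof -
    have e: "dirD B f = (\<lambda>y. B y \<bullet> grad f y)" by (simp add: fun_eq_iff dirD_grad)
    have "dirD A (dirD B f) x = dirD A (\<lambda>y. B y \<bullet> grad f y) x" unfolding e ..
    also have "\<dots> = vdirD A B x \<bullet> grad f x + B x \<bullet> vdirD A (grad f) x"
      by (rule dirD_inner[OF B sv_grad[OF f] x])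
    finally show ?thesis by (simp add: vdirD_jac inner_commute)
  qed
  have sym: "(?H *v V x) \<bullet> W x = (?H *v W x) \<bullet> V x"
  proof -
    have "(?H *v V x) \<bullet> W x = (\<Sum>j\<in>UNIV. \<Sum>i\<in>UNIV. ?H $ j $ i * V x $ i * W x $ j)"
      by (simp add: matrix_vector_mult_def inner_vec_def sum_distrib_left sum_distrib_right mult.commute mult.left_commute)
    also have "\<dots> = (\<Sum>i\<in>UNIV. \<Sum>j\<in>UNIV. ?H $ j $ i * V x $ i * W x $ j)" by (rule sum.swap)
    also have "\<dots> = (\<Sum>i\<in>UNIV. \<Sum>j\<in>UNIV. ?H $ i $ j * W x $ j * V x $ i)"
      using hess_sym[OF f x] by (simp add: mult.commute mult.left_commute)
    also have "\<dots> = (?H *v W x) \<bullet> V x"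
      by (simp add: matrix_vector_mult_def inner_vec_def sum_distrib_left sum_distrib_right mult.commute mult.left_commute)
    finally show ?thesis .
  qed
  show ?thesis unfolding 1[OF V W] 1[OF W V] using sym
    by (simp add: dirD_grad lie_jac inner_diff_right inner_commute)
qed

lemma sm_dirD: "sv X \<Longrightarrow> smooth_fun U f \<Longrightarrow> smooth_fun U (dirD X f)"
  unfolding dirD_def by (intro smooth_sum[OF openU] smooth_mult[OF openU] sv_comp smooth_pd) auto

lemma jacobi:
  assumes A: "sv A" and B: "sv B" and C: "sv C" and x: "x \<in> U"
  shows "lie (lie A B) C x + lie B (lie A C) x = lie A (lie B C) x"
proof -
  have comp: "lie P Q y $ k = dirD P (\<lambda>z. Q z $ k) y - dirD Q (\<lambda>z. P z $ k) y" for P Q y k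
    by (simp add: lie_def vdirD_def)
  have cf: "(\<lambda>z. lie P Q z $ k) = (\<lambda>z. dirD P (\<lambda>z. Q z $ k) z - dirD Q (\<lambda>z. P z $ k) z)" for P Q k
    by (simp add: comp)
  have dd: "dirD R (\<lambda>z. dirD P (\<lambda>z. Q z $ k) z - dirD Q (\<lambda>z. P z $ k) z) x = dirD R (dirD P (\<lambda>z. Q z $ k)) x - dirD R (dirD Q (\<lambda>z. P z $ k)) x"
    if "sv P" "sv Q" for P Q R k
    by (rule dirD_diff) (intro diffat[OF _ x] sm_dirD that sv_comp)+
  have cm: "dirD (lie P Q) (\<lambda>z. R z $ k) x = dirD P (dirD Q (\<lambda>z. R z $ k)) x - dirD Q (dirD P (\<lambda>z. R z $ k)) x"
    if "sv P" "sv Q" "sv R" for P Q R k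
    using commutator[OF that(1,2) sv_comp[OF that(3)] x] by simp
  show ?thesis
    unfolding vec_eq_iff
    by (simp add: comp dd cm A B C sv_lie)
qed

lemma vdirD_matvec:
  assumes M: "\<And>a b. smooth_fun U (\<lambda>y. M y $ a $ b)" and Z: "sv Z" and x: "x \<in> U"
  shows "vdirD X (\<lambda>y. M y *v Z y) x = M x *v vdirD X Z x + dM X M x *v Z x"
proof -
  have "vdirD X (\<lambda>y. M y *v Z y) x $ a = (M x *v vdirD X Z x + dM X M x *v Z x) $ a" for a
  proof -
    have "vdirD X (\<lambda>y. M y *v Z y) x $ a = dirD X (\<lambda>y. \<Sum>b\<in>UNIV. M y $ a $ b * Z y $ b) x"
      by (simp add: vdirD_def matrix_vector_mult_def)
    also have "\<dots> = (\<Sum>b\<in>UNIV. dirD X (\<lambda>y. M y $ a $ b * Z y $ b) x)"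
      by (rule dirD_sum) (auto intro!: differentiable_mult diffat[OF M x] sv_diffat[OF Z x])
    also have "\<dots> = (\<Sum>b\<in>UNIV. dirD X (\<lambda>y. M y $ a $ b) x * Z x $ b + M x $ a $ b * dirD X (\<lambda>y. Z y $ b) x)"
      by (intro sum.cong refl dirD_mult diffat[OF M x] sv_diffat[OF Z x])
    also have "\<dots> = (M x *v vdirD X Z x + dM X M x *v Z x) $ a"
      by (simp add: matrix_vector_mult_def vdirD_def dM_def sum.distrib algebra_simps)
    finally show ?thesis .
  qed
  then show ?thesis by (simp add: vec_eq_iff)
qed

lemma GamM_sym: "x \<in> U \<Longrightarrow> GamM g x u *v v = GamM g x v *v u"
proof -
  assume x: "x \<in> U"
  have "(\<Sum>j\<in>UNIV. (\<Sum>i\<in>UNIV. u $ i * christoffel g x k i j) * v $ j)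
      = (\<Sum>j\<in>UNIV. (\<Sum>i\<in>UNIV. v $ i * christoffel g x k i j) * u $ j)" for k
  proof -
    have "(\<Sum>j\<in>UNIV. (\<Sum>i\<in>UNIV. u $ i * christoffel g x k i j) * v $ j)
        = (\<Sum>j\<in>UNIV. \<Sum>i\<in>UNIV. u $ i * v $ j * christoffel g x k i j)"
      by (simp add: sum_distrib_left sum_distrib_right mult.commute mult.left_commute)
    also have "\<dots> = (\<Sum>i\<in>UNIV. \<Sum>j\<in>UNIV. u $ i * v $ j * christoffel g x k i j)" by (rule sum.swap)
    also have "\<dots> = (\<Sum>i\<in>UNIV. \<Sum>j\<in>UNIV. u $ i * v $ j * christoffel g x k j i)"
      using chris_sym[OF x] by simp
    also have "\<dots> = (\<Sum>j\<in>UNIV. (\<Sum>i\<in>UNIV. v $ i * christoffel g x k i j) * u $ j)"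
      by (simp add: sum_distrib_left sum_distrib_right mult.commute mult.left_commute)
    finally show ?thesis .
  qed
  then show ?thesis by (simp add: GamM_def matrix_vector_mult_def vec_eq_iff)
qed

lemma torsion: "x \<in> U \<Longrightarrow> nabla g X Y x - nabla g Y X x = lie X Y x"
  by (simp add: nabla_GamM lie_jac GamM_sym)

lemma dg_eq:
  assumes x: "x \<in> U"
  shows "dM X g x = transpose (GamM g x (X x)) ** g x + g x ** GamM g x (X x)"
proof -
  have "dirD X (\<lambda>y. g y $ a $ b) x =
     (\<Sum>m\<in>UNIV. (\<Sum>i\<in>UNIV. X x $ i * christoffel g x m i a) * g x $ m $ b)
     + (\<Sum>m\<in>UNIV. g x $ a $ m * (\<Sum>i\<in>UNIV. X x $ i * christoffel g x m i b))" for a b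
  proof -
    have "dirD X (\<lambda>y. g y $ a $ b) x = (\<Sum>i\<in>UNIV. X x $ i *
        ((\<Sum>m\<in>UNIV. g x $ m $ b * christoffel g x m i a) + (\<Sum>m\<in>UNIV. g x $ a $ m * christoffel g x m i b)))"
      unfolding dirD_def using metric_chris[OF x] by simp
    also have "\<dots> = (\<Sum>i\<in>UNIV. \<Sum>m\<in>UNIV. X x $ i * christoffel g x m i a * g x $ m $ b)
        + (\<Sum>i\<in>UNIV. \<Sum>m\<in>UNIV. g x $ a $ m * (X x $ i * christoffel g x m i b))"
      by (simp add: sum.distrib sum_distrib_left algebra_simps)
    also have "\<dots> = (\<Sum>m\<in>UNIV. \<Sum>i\<in>UNIV. X x $ i * christoffel g x m i a * g x $ m $ b)
        + (\<Sum>m\<in>UNIV. \<Sum>i\<in>UNIV. g x $ a $ m * (X x $ i * christoffel g x m i b))"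
      by (subst (1 2) sum.swap) simp
    also have "\<dots> = (\<Sum>m\<in>UNIV. (\<Sum>i\<in>UNIV. X x $ i * christoffel g x m i a) * g x $ m $ b)
     + (\<Sum>m\<in>UNIV. g x $ a $ m * (\<Sum>i\<in>UNIV. X x $ i * christoffel g x m i b))"
      by (simp add: sum_distrib_left sum_distrib_right)
    finally show ?thesis .
  qed
  then show ?thesis
    by (simp add: dM_def GamM_def matrix_matrix_mult_def transpose_def vec_eq_iff)
qed

lemma metric_compat:
  assumes X: "sv X" and Y: "sv Y" and Z: "sv Z" and x: "x \<in> U"
  shows "dirD X (\<lambda>y. gpt g y (Y y) (Z y)) x = gpt g x (nabla g X Y x) (Z x) + gpt g x (Y x) (nabla g X Z x)"
proof -
  let ?A = "GamM g x (X x)"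
  have "dirD X (\<lambda>y. gpt g y (Y y) (Z y)) x = vdirD X Y x \<bullet> (g x *v Z x) + Y x \<bullet> vdirD X (\<lambda>y. g y *v Z y) x"
    unfolding gpt_def by (rule dirD_inner[OF Y sm_gmat[OF Z] x])
  also have "vdirD X (\<lambda>y. g y *v Z y) x = g x *v vdirD X Z x + dM X g x *v Z x"
    by (rule vdirD_matvec[OF sm_g_entry Z x])
  also have "dM X g x *v Z x = transpose ?A *v (g x *v Z x) + g x *v (?A *v Z x)"
    unfolding dg_eq[OF x] by (simp add: matrix_vector_mult_add_rdistrib matrix_vector_mul_assoc)
  finally have "dirD X (\<lambda>y. gpt g y (Y y) (Z y)) x = vdirD X Y x \<bullet> (g x *v Z x)
     + Y x \<bullet> (g x *v vdirD X Z x) + (?A *v Y x) \<bullet> (g x *v Z x) + Y x \<bullet> (g x *v (?A *v Z x))"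
    by (simp add: inner_add_right inner_vmul)
  also have "\<dots> = gpt g x (nabla g X Y x) (Z x) + gpt g x (Y x) (nabla g X Z x)"
    by (simp add: gpt_def nabla_GamM vdirD_jac inner_add_left inner_add_right matrix_vector_right_distrib)
  finally show ?thesis .
qed

end

context cm begin

lemma g_xi: "y \<in> U \<Longrightarrow> gpt g y (xi y) v = eta y \<bullet> v"
  using compat[of y "xi y" v] phi_xi[of y] eta_xi[of y] by simp

lemma g_xi2: "y \<in> U \<Longrightarrow> gpt g y v (xi y) = eta y \<bullet> v"
  using g_xi gpt_sym by metis

lemma deta_pt_formula: "y \<in> U \<Longrightarrow> deta_pt eta y u v = (jac eta y *v u) \<bullet> v - (jac eta y *v v) \<bullet> u"
proof -
  assume y: "y \<in> U"
  have d: "dirD (\<lambda>_. a) (\<lambda>z. eta z \<bullet> b) y = (jac eta y *v a) \<bullet> b" for a b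
    using dirD_inner[OF sv_eta sv_const y, of "\<lambda>_. a" b] by (simp add: vdirD_jac)
  show ?thesis unfolding deta_pt_def deta_def d by simp
qed

lemma deta_skew: "y \<in> U \<Longrightarrow> deta_pt eta y u v = - deta_pt eta y v u"
  by (simp add: deta_pt_formula)

lemma phi_skew: "y \<in> U \<Longrightarrow> gpt g y u (phi y *v v) = - gpt g y (phi y *v u) v"
  using deta_skew[of y u v] deta_g[of y u v] deta_g[of y v u] gpt_sym[of y v "phi y *v u"] by simp

lemma eta_phi: "y \<in> U \<Longrightarrow> eta y \<bullet> (phi y *v v) = 0"
  using g_xi[of y "phi y *v v"] phi_skew[of y "xi y" v] phi_xi[of y] by simp

lemma g_nondeg: "y \<in> U \<Longrightarrow> (\<And>w. gpt g y v w = 0) \<Longrightarrow> v = 0"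
  using g_pos by (metis less_irrefl)

lemma deta_tensor:
  assumes X: "sv X" and Y: "sv Y" and x: "x \<in> U"
  shows "deta eta X Y x = deta_pt eta x (X x) (Y x)"
proof -
  have "deta eta X Y x = (vdirD X eta x \<bullet> Y x + eta x \<bullet> vdirD X Y x) - (vdirD Y eta x \<bullet> X x + eta x \<bullet> vdirD Y X x)
      - eta x \<bullet> lie X Y x"
    unfolding deta_def dirD_inner[OF sv_eta Y x] dirD_inner[OF sv_eta X x] ..
  also have "\<dots> = (jac eta x *v X x) \<bullet> Y x - (jac eta x *v Y x) \<bullet> X x"
    by (simp add: lie_def inner_diff_right vdirD_jac)
  also have "\<dots> = deta_pt eta x (X x) (Y x)" by (simp add: deta_pt_formula x)
  finally show ?thesis .
qed

lemma deta_field: "sv X \<Longrightarrow> sv Y \<Longrightarrow> y \<in> U \<Longrightarrow> deta eta X Y y = 2 * gpt g y (X y) (phi y *v Y y)"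
  by (simp add: deta_tensor deta_g)

lemma deta_xi: "sv Y \<Longrightarrow> y \<in> U \<Longrightarrow> deta eta xi Y y = 0"
  by (simp add: deta_tensor sv_xi reeb)

abbreviation E :: "(real^'n \<Rightarrow> real^'n) \<Rightarrow> real^'n \<Rightarrow> real" where
  "E V \<equiv> (\<lambda>y. eta y \<bullet> V y)"

lemma sm_E: "sv V \<Longrightarrow> smooth_fun U (E V)"
  by (rule sm_inner[OF sv_eta])

lemma dirD_Exi: "y \<in> U \<Longrightarrow> dirD V (E xi) y = 0"
proof -
  assume y: "y \<in> U"
  have "dirD V (E xi) y = dirD V (\<lambda>_. 1) y" by (rule dirD_local[OF y]) (simp add: eta_xi)
  then show ?thesis by simp
qed

lemma F_zero: "sv V \<Longrightarrow> y \<in> U \<Longrightarrow> dirD xi (E V) y - E (lie xi V) y = 0"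
  using deta_xi[of V y] dirD_Exi[of y V] by (simp add: deta_def)

lemma dirD_F_zero:
  assumes V: "sv V" and x: "x \<in> U"
  shows "dirD W (dirD xi (E V)) x - dirD W (E (lie xi V)) x = 0"
proof -
  have "dirD W (\<lambda>y. dirD xi (E V) y - E (lie xi V) y) x = dirD W (\<lambda>_. 0) x"
    by (rule dirD_local[OF x]) (simp add: F_zero[OF V])
  moreover have "dirD W (\<lambda>y. dirD xi (E V) y - E (lie xi V) y) x = dirD W (dirD xi (E V)) x - dirD W (E (lie xi V)) x"
    by (rule dirD_diff) (intro diffat[OF _ x] sm_dirD sv_xi sm_E sv_lie V)+
  ultimately show ?thesis by simp
qed

lemma lie_deta:
  assumes X: "sv X" and Y: "sv Y" and x: "x \<in> U"
  shows "dirD xi (deta eta X Y) x - deta eta (lie xi X) Y x - deta eta X (lie xi Y) x = 0"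
proof -
  have sX: "sv (lie xi X)" and sY: "sv (lie xi Y)" and sXY: "sv (lie X Y)" using X Y by (auto intro: sv_lie sv_xi)
  have dfun: "deta eta A B = (\<lambda>y. dirD A (E B) y - dirD B (E A) y - E (lie A B) y)" for A B
    by (simp add: deta_def fun_eq_iff)
  have 1: "dirD xi (deta eta X Y) x = dirD xi (dirD X (E Y)) x - dirD xi (dirD Y (E X)) x - dirD xi (E (lie X Y)) x"
    unfolding dfun
    by (subst dirD_diff, (intro differentiable_diff diffat[OF _ x] sm_dirD sm_E X Y sXY)+,
        subst dirD_diff, (intro diffat[OF _ x] sm_dirD sm_E X Y sXY)+, simp)
  have c1: "dirD (lie xi X) (E Y) x = dirD xi (dirD X (E Y)) x - dirD X (dirD xi (E Y)) x"
    using commutator[OF sv_xi X sm_E[OF Y] x] by simp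
  have c2: "dirD (lie xi Y) (E X) x = dirD xi (dirD Y (E X)) x - dirD Y (dirD xi (E X)) x"
    using commutator[OF sv_xi Y sm_E[OF X] x] by simp
  have j: "E (lie (lie xi X) Y) x + E (lie X (lie xi Y)) x = E (lie xi (lie X Y)) x"
    using jacobi[OF sv_xi X Y x] by (metis inner_add_right)
  have f1: "dirD X (dirD xi (E Y)) x - dirD X (E (lie xi Y)) x = 0" by (rule dirD_F_zero[OF Y x])
  have f2: "dirD Y (dirD xi (E X)) x - dirD Y (E (lie xi X)) x = 0" by (rule dirD_F_zero[OF X x])
  have f3: "dirD xi (E (lie X Y)) x - E (lie xi (lie X Y)) x = 0" by (rule F_zero[OF sXY x])
  show ?thesis
    unfolding 1 by (simp add: deta_def c1 c2) (use j f1 f2 f3 in linarith)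
qed

definition Lg :: "(real^'n \<Rightarrow> real^'n) \<Rightarrow> (real^'n \<Rightarrow> real^'n) \<Rightarrow> real^'n \<Rightarrow> real" where
  "Lg X Z x = dirD xi (\<lambda>y. gpt g y (X y) (Z y)) x - gpt g x (lie xi X x) (Z x) - gpt g x (X x) (lie xi Z x)"

lemma Lg_phi:
  assumes K: "K_contact U eta xi phi g" and X: "sv X" and Y: "sv Y" and x: "x \<in> U"
  shows "Lg X (\<lambda>y. phi y *v Y y) x = 0"
proof -
  have kc: "lie xi (\<lambda>y. phi y *v Y y) x = phi x *v lie xi Y x"
    using K Y x unfolding K_contact_def by (metis (no_types, lifting) eq_iff_diff_eq_0 scaleR_eq_0_iff zero_neq_numeral divide_eq_0_iff one_neq_zero)
  have sX: "sv (lie xi X)" and sY: "sv (lie xi Y)" using X Y by (auto intro: sv_lie sv_xi)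
  have "dirD xi (deta eta X Y) x = dirD xi (\<lambda>y. 2 * gpt g y (X y) (phi y *v Y y)) x"
    by (rule dirD_local[OF x]) (simp add: deta_field X Y)
  also have "\<dots> = 2 * dirD xi (\<lambda>y. gpt g y (X y) (phi y *v Y y)) x"
    by (rule dirD_cmult) (intro diffat[OF _ x] sm_gpt X sv_phi Y)
  finally have 1: "dirD xi (deta eta X Y) x = 2 * dirD xi (\<lambda>y. gpt g y (X y) (phi y *v Y y)) x" .
  have 2: "deta eta (lie xi X) Y x = 2 * gpt g x (lie xi X x) (phi x *v Y x)" by (rule deta_field[OF sX Y x])
  have 3: "deta eta X (lie xi Y) x = 2 * gpt g x (X x) (lie xi (\<lambda>y. phi y *v Y y) x)"
    using deta_field[OF X sY x] kc by simp
  show ?thesis using lie_deta[OF X Y x] unfolding 1 2 3 Lg_def by simp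
qed

lemma Lg_nabla:
  assumes X: "sv X" and Z: "sv Z" and x: "x \<in> U"
  shows "Lg X Z x = gpt g x (nabla g X xi x) (Z x) + gpt g x (X x) (nabla g Z xi x)"
proof -
  have "lie xi X x = nabla g xi X x - nabla g X xi x" by (simp add: torsion x)
  moreover have "lie xi Z x = nabla g xi Z x - nabla g Z xi x" by (simp add: torsion x)
  ultimately show ?thesis unfolding Lg_def metric_compat[OF sv_xi X Z x]
    by (simp add: gpt_lin)
qed

lemma Lg_xi:
  assumes X: "sv X" and x: "x \<in> U"
  shows "Lg X xi x = 0"
proof -
  have "dirD xi (\<lambda>y. gpt g y (X y) (xi y)) x = dirD xi (E X) x"
    by (rule dirD_local[OF x]) (simp add: g_xi2)
  moreover have "lie xi xi x = 0" by (simp add: lie_def)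
  moreover have "gpt g x (lie xi X x) (xi x) = E (lie xi X) x" by (simp add: g_xi2 x)
  ultimately show ?thesis unfolding Lg_def using F_zero[OF X x] by simp
qed

definition Kf :: "real^'n \<Rightarrow> real^'n \<Rightarrow> real^'n \<Rightarrow> real" where
  "Kf x u z = gpt g x (cjac g xi x *v u) z + gpt g x u (cjac g xi x *v z)"

lemma Lg_Kf: "sv X \<Longrightarrow> sv Z \<Longrightarrow> x \<in> U \<Longrightarrow> Lg X Z x = Kf x (X x) (Z x)"
  by (simp add: Lg_nabla Kf_def nabla_cjac)

lemma Kf_zero:
  assumes K: "K_contact U eta xi phi g" and x: "x \<in> U"
  shows "Kf x u z = 0"
proof -
  have lin: "Kf x u (a + c *\<^sub>R b) = Kf x u a + c * Kf x u b" for a b c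
    by (simp add: Kf_def gpt_lin matrix_vector_right_distrib matrix_vector_mult_scaleR algebra_simps)
  have 1: "Kf x u (phi x *v w) = 0" for w
    using Lg_phi[OF K sv_const sv_const x, of u w] Lg_Kf[OF sv_const sv_phi[OF sv_const] x, of u w] by simp
  have 2: "Kf x u (xi x) = 0"
    using Lg_xi[OF sv_const x, of u] Lg_Kf[OF sv_const sv_xi x, of u] by simp
  have "z = phi x *v (- (phi x *v z)) + (eta x \<bullet> z) *\<^sub>R xi x"
    using phi2[OF x, of z] by (simp add: matrix_vector_mult_scaleR[of _ "-1", simplified] algebra_simps)
  then have "Kf x u z = Kf x u (phi x *v (- (phi x *v z))) + (eta x \<bullet> z) * Kf x u (xi x)"
    by (metis lin)
  then show ?thesis using 1 2 by simp
qed

lemma deta_nabla: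
  assumes x: "x \<in> U"
  shows "deta_pt eta x u z = gpt g x (cjac g xi x *v u) z - gpt g x (cjac g xi x *v z) u"
proof -
  have d: "dirD (\<lambda>_. a) (\<lambda>y. eta y \<bullet> b) x = gpt g x (cjac g xi x *v a) b + gpt g x (xi x) (GamM g x a *v b)" for a b
  proof -
    have "dirD (\<lambda>_. a) (\<lambda>y. eta y \<bullet> b) x = dirD (\<lambda>_. a) (\<lambda>y. gpt g y (xi y) ((\<lambda>_. b) y)) x"
      by (rule dirD_local[OF x]) (simp add: g_xi)
    also have "\<dots> = gpt g x (nabla g (\<lambda>_. a) xi x) b + gpt g x (xi x) (nabla g (\<lambda>_. a) (\<lambda>_. b) x)"
      using metric_compat[OF sv_const sv_xi sv_const x] by simp
    moreover have "nabla g (\<lambda>_. a) xi x = cjac g xi x *v a" by (simp add: nabla_cjac)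
    moreover have "nabla g (\<lambda>_. a) (\<lambda>_. b) x = GamM g x a *v b" by (simp add: nabla_GamM)
    ultimately show ?thesis by simp
  qed
  show ?thesis unfolding deta_pt_def deta_def d using GamM_sym[OF x, of u z] by simp
qed

lemma nabla_xi_mat:
  assumes K: "K_contact U eta xi phi g" and x: "x \<in> U"
  shows "cjac g xi x *v u = - (phi x *v u)"
proof -
  let ?A = "cjac g xi x"
  have "gpt g x (?A *v u + phi x *v u) z = 0" for z
  proof -
    have k: "gpt g x (?A *v u) z + gpt g x (?A *v z) u = 0"
      using Kf_zero[OF K x, of u z] gpt_sym[OF x, of u] by (simp add: Kf_def)
    have d: "gpt g x (?A *v u) z - gpt g x (?A *v z) u = - 2 * gpt g x (phi x *v u) z"
      using deta_nabla[OF x, of u z] deta_g[OF x, of u z] phi_skew[OF x, of u z] by simp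
    from k d have "gpt g x (?A *v u) z = - gpt g x (phi x *v u) z" by linarith
    then show ?thesis by (simp add: gpt_lin)
  qed
  then have "?A *v u + phi x *v u = 0" using g_nondeg[OF x] by blast
  then show ?thesis by (simp add: eq_neg_iff_add_eq_0)
qed

lemma nabla_xi:
  assumes K: "K_contact U eta xi phi g" and x: "x \<in> U"
  shows "nabla g X xi x = - (phi x *v X x)"
  by (simp add: nabla_cjac nabla_xi_mat[OF K x])

definition Dphi :: "(real^'n \<Rightarrow> real^'n) \<Rightarrow> (real^'n \<Rightarrow> real^'n) \<Rightarrow> real^'n \<Rightarrow> real^'n" where
  "Dphi X Y x = nabla g X (\<lambda>y. phi y *v Y y) x - phi x *v nabla g X Y x"

definition Dp :: "real^'n \<Rightarrow> real^'n \<Rightarrow> real^'n \<Rightarrow> real^'n" where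
  "Dp x u v = ((\<chi> a b. u \<bullet> grad (\<lambda>y. phi y $ a $ b) x) + GamM g x u ** phi x - phi x ** GamM g x u) *v v"

lemma mv_minus: "(A::real^'n^'n) *v (- v) = - (A *v v)"
  by (simp add: matrix_vector_mult_def vec_eq_iff sum_negf)

lemma nabla_minus2:
  assumes V: "sv V" and x: "x \<in> U"
  shows "nabla g X (\<lambda>y. - V y) x = - nabla g X V x"
proof -
  have "vdirD X (\<lambda>y. - V y) x = - vdirD X V x" by (rule vdirD_minus[OF V x])
  then show ?thesis by (simp add: nabla_GamM vdirD_jac mv_minus)
qed

lemma nabla_zero2: "nabla g X (\<lambda>_. 0) x = 0"
  by (simp add: nabla_GamM)

lemma Dphi_tensor:
  assumes X: "sv X" and Y: "sv Y" and x: "x \<in> U"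
  shows "Dphi X Y x = Dp x (X x) (Y x)"
proof -
  have v: "vdirD X (\<lambda>y. phi y *v Y y) x = phi x *v vdirD X Y x + dM X phi x *v Y x"
    by (rule vdirD_matvec[OF sm_phi_entry Y x])
  have dm: "dM X phi x = (\<chi> a b. X x \<bullet> grad (\<lambda>y. phi y $ a $ b) x)"
    by (simp add: dM_def dirD_grad)
  show ?thesis
    unfolding Dphi_def Dp_def nabla_GamM vdirD_jac[symmetric] v dm
    by (simp add: matrix_vector_mult_add_rdistrib matrix_vector_mult_diff_rdistrib matrix_vector_right_distrib
        matrix_vector_mul_assoc[symmetric])
qed

lemma curv_xi:
  assumes K: "K_contact U eta xi phi g" and X: "sv X" and Y: "sv Y" and x: "x \<in> U"
  shows "curv g X Y xi x = Dphi Y X x - Dphi X Y x"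
proof -
  have a: "nabla g X (nabla g Y xi) x = - nabla g X (\<lambda>y. phi y *v Y y) x"
  proof -
    have "nabla g X (nabla g Y xi) x = nabla g X (\<lambda>y. - (phi y *v Y y)) x"
      by (rule nabla_local[OF x]) (simp add: nabla_xi[OF K])
    then show ?thesis using nabla_minus2[OF sv_phi[OF Y] x] by simp
  qed
  have b: "nabla g Y (nabla g X xi) x = - nabla g Y (\<lambda>y. phi y *v X y) x"
  proof -
    have "nabla g Y (nabla g X xi) x = nabla g Y (\<lambda>y. - (phi y *v X y)) x"
      by (rule nabla_local[OF x]) (simp add: nabla_xi[OF K])
    then show ?thesis using nabla_minus2[OF sv_phi[OF X] x] by simp
  qed
  have c: "nabla g (lie X Y) xi x = - (phi x *v (nabla g X Y x - nabla g Y X x))"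
    using nabla_xi[OF K x, of "lie X Y"] torsion[OF x, of X Y] by simp
  show ?thesis unfolding curv_def a b c Dphi_def
    by (simp add: matrix_vector_mult_diff_distrib algebra_simps)
qed

lemma Dphi_xi_X:
  assumes K: "K_contact U eta xi phi g" and X: "sv X" and x: "x \<in> U"
  shows "Dphi xi X x = 0"
proof -
  have kc: "lie xi (\<lambda>y. phi y *v X y) x = phi x *v lie xi X x"
    using K X x unfolding K_contact_def by (metis (no_types, lifting) eq_iff_diff_eq_0 scaleR_eq_0_iff zero_neq_numeral divide_eq_0_iff one_neq_zero)
  have 1: "nabla g xi (\<lambda>y. phi y *v X y) x = lie xi (\<lambda>y. phi y *v X y) x + nabla g (\<lambda>y. phi y *v X y) xi x"
    using torsion[OF x, of xi "\<lambda>y. phi y *v X y"] by (simp add: algebra_simps)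
  have 2: "nabla g xi X x = lie xi X x + nabla g X xi x"
    using torsion[OF x, of xi X] by (simp add: algebra_simps)
  show ?thesis unfolding Dphi_def 1 2 kc nabla_xi[OF K x]
    by (simp add: matrix_vector_right_distrib matrix_vector_mult_diff_distrib)
qed

lemma Dphi_X_xi:
  assumes K: "K_contact U eta xi phi g" and X: "sv X" and x: "x \<in> U"
  shows "Dphi X xi x = - X x + (eta x \<bullet> X x) *\<^sub>R xi x"
proof -
  have "nabla g X (\<lambda>y. phi y *v xi y) x = nabla g X (\<lambda>_. 0) x"
    by (rule nabla_local[OF x]) (simp add: phi_xi)
  then have "nabla g X (\<lambda>y. phi y *v xi y) x = 0" by (simp add: nabla_zero2)
  moreover have "phi x *v nabla g X xi x = - (phi x *v (phi x *v X x))"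
    by (simp add: nabla_xi[OF K x] matrix_vector_mult_scaleR[of _ "-1", simplified])
  ultimately show ?thesis unfolding Dphi_def using phi2[OF x, of "X x"] by simp
qed

lemma eta_Dphi:
  assumes K: "K_contact U eta xi phi g" and X: "sv X" and Y: "sv Y" and x: "x \<in> U"
  shows "eta x \<bullet> Dphi X Y x = gpt g x (X x) (Y x) - (eta x \<bullet> X x) * (eta x \<bullet> Y x)"
proof -
  have z: "dirD X (\<lambda>y. gpt g y (xi y) (phi y *v Y y)) x = 0"
  proof -
    have "dirD X (\<lambda>y. gpt g y (xi y) (phi y *v Y y)) x = dirD X (\<lambda>_. 0) x"
      by (rule dirD_local[OF x]) (simp add: g_xi eta_phi)
    then show ?thesis by simp
  qed
  have "gpt g x (xi x) (nabla g X (\<lambda>y. phi y *v Y y) x) = - gpt g x (nabla g X xi x) (phi x *v Y x)"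
    using metric_compat[OF X sv_xi sv_phi[OF Y] x] z by simp
  also have "\<dots> = gpt g x (phi x *v X x) (phi x *v Y x)" by (simp add: nabla_xi[OF K x] gpt_lin)
  also have "\<dots> = gpt g x (X x) (Y x) - (eta x \<bullet> X x) * (eta x \<bullet> Y x)" by (rule compat[OF x])
  finally have 1: "gpt g x (xi x) (nabla g X (\<lambda>y. phi y *v Y y) x) = \<dots>" .
  show ?thesis unfolding Dphi_def inner_diff_right eta_phi[OF x] using 1 g_xi[OF x] by simp
qed

lemma Dphi_skew:
  assumes X: "sv X" and Y: "sv Y" and Z: "sv Z" and x: "x \<in> U"
  shows "gpt g x (Dphi X Y x) (Z x) + gpt g x (Y x) (Dphi X Z x) = 0"
proof -
  have z: "dirD X (\<lambda>y. gpt g y (phi y *v Y y) (Z y) + gpt g y (Y y) (phi y *v Z y)) x = 0"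
  proof -
    have "dirD X (\<lambda>y. gpt g y (phi y *v Y y) (Z y) + gpt g y (Y y) (phi y *v Z y)) x = dirD X (\<lambda>_. 0) x"
      by (rule dirD_local[OF x]) (simp add: phi_skew)
    then show ?thesis by simp
  qed
  have "dirD X (\<lambda>y. gpt g y (phi y *v Y y) (Z y) + gpt g y (Y y) (phi y *v Z y)) x
      = dirD X (\<lambda>y. gpt g y (phi y *v Y y) (Z y)) x + dirD X (\<lambda>y. gpt g y (Y y) (phi y *v Z y)) x"
    by (rule dirD_add) (intro diffat[OF _ x] sm_gpt sv_phi X Y Z)+
  also have "\<dots> = gpt g x (nabla g X (\<lambda>y. phi y *v Y y) x) (Z x) + gpt g x (phi x *v Y x) (nabla g X Z x)
      + (gpt g x (nabla g X Y x) (phi x *v Z x) + gpt g x (Y x) (nabla g X (\<lambda>y. phi y *v Z y) x))"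
    using metric_compat[OF X sv_phi[OF Y] Z x] metric_compat[OF X Y sv_phi[OF Z] x] by simp
  also have "\<dots> = gpt g x (Dphi X Y x) (Z x) + gpt g x (Y x) (Dphi X Z x)"
    unfolding Dphi_def using phi_skew[OF x, of "Y x" "nabla g X Z x"] phi_skew[OF x, of "nabla g X Y x" "Z x"]
      gpt_sym[OF x, of "phi x *v Y x" "nabla g X Z x"] gpt_sym[OF x, of "Y x" "phi x *v nabla g X Z x"]
    by (simp add: gpt_lin)
  finally show ?thesis using z by simp
qed

end

lemma alg_main:
  fixes R :: "'v::real_inner \<Rightarrow> 'v \<Rightarrow> 'v \<Rightarrow> 'v" and D :: "'v \<Rightarrow> 'v \<Rightarrow> 'v" and G :: "'v \<Rightarrow> 'v \<Rightarrow> real"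
  assumes add1: "\<And>a b c d. R (a + b) c d = R a c d + R b c d"
    and add2: "\<And>a b c d. R a (b + c) d = R a b d + R a c d"
    and add3: "\<And>a b c d. R a b (c + d) = R a b c + R a b d"
    and sc1: "\<And>r a c d. R (r *\<^sub>R a) c d = r *\<^sub>R R a c d"
    and sc2: "\<And>r a c d. R a (r *\<^sub>R c) d = r *\<^sub>R R a c d"
    and sc3: "\<And>r a c d. R a c (r *\<^sub>R d) = r *\<^sub>R R a c d"
    and anti: "\<And>a b c. R b a c = - R a b c"
    and bian: "\<And>a b c. R a b c + R b c a + R c a b = 0"
    and F1: "\<And>a b. R a b xz = D b a - D a b"
    and F2: "\<And>a. D xz a = 0"
    and F3: "\<And>a. D a xz = - a + (e \<bullet> a) *\<^sub>R xz"
    and F4: "\<And>a b. e \<bullet> D a b = G a b - (e \<bullet> a) * (e \<bullet> b)"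
    and Gsym: "\<And>a b. G a b = G b a"
    and ex: "e \<bullet> xz = 1"
    and WSS: "\<And>u v. R u xz (R v xz xz) - R (R u xz v) xz xz - R v (R u xz xz) xz - R v xz (R u xz xz) = 0"
  shows "D u v - D v u = (e \<bullet> u) *\<^sub>R v - (e \<bullet> v) *\<^sub>R u"
proof -
  have diff1: "R (a - b) c d = R a c d - R b c d" for a b c d
    using add1[of a "(-1) *\<^sub>R b" c d] sc1[of "-1" b c d] by simp
  have diff2: "R a (b - c) d = R a b d - R a c d" for a b c d
    using add2[of a b "(-1) *\<^sub>R c" d] sc2[of a "-1" c d] by simp
  have diff3: "R a b (c - d) = R a b c - R a b d" for a b c d
    using add3[of a b c "(-1) *\<^sub>R d"] sc3[of a b "-1" d] by simp
  define \<pi> where "\<pi> a = a - (e \<bullet> a) *\<^sub>R xz" for a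
  have two: "(2 * c) *\<^sub>R w = c *\<^sub>R w + c *\<^sub>R w" for c and w :: 'v
    by (metis mult_2 scaleR_left_distrib)
  have three: "(3 * c) *\<^sub>R w = c *\<^sub>R w + c *\<^sub>R w + c *\<^sub>R w" for c and w :: 'v
    by (simp add: algebra_simps flip: scaleR_add_left)
  have three': "3 *\<^sub>R w = w + w + w" for w :: 'v
  proof -
    have "(3::real) = 1 + 1 + 1" by simp
    then have "3 *\<^sub>R w = (1 + 1 + 1) *\<^sub>R w" by (simp only:)
    then show ?thesis by (simp only: scaleR_add_left scaleR_one)
  qed
  have P1: "R a xz xz = \<pi> a" for a unfolding \<pi>_def using F1[of a xz] F2[of a] F3[of a] by simp
  have E: "(e \<bullet> R u xz v) *\<^sub>R xz - (e \<bullet> v) *\<^sub>R \<pi> u - R v u xz + (2 * (e \<bullet> u)) *\<^sub>R \<pi> v - R v xz u = 0" for u v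
  proof -
    have T1: "R u xz (R v xz xz) = R u xz v - (e \<bullet> v) *\<^sub>R \<pi> u"
      unfolding P1 by (simp add: \<pi>_def diff3 sc3 P1)
    have T2: "R (R u xz v) xz xz = R u xz v - (e \<bullet> R u xz v) *\<^sub>R xz"
      unfolding P1 by (simp add: \<pi>_def)
    have T3: "R v (R u xz xz) xz = R v u xz - (e \<bullet> u) *\<^sub>R \<pi> v"
      unfolding P1 by (simp add: \<pi>_def diff2 sc2 P1)
    have T4: "R v xz (R u xz xz) = R v xz u - (e \<bullet> u) *\<^sub>R \<pi> v"
      unfolding P1 by (simp add: \<pi>_def diff3 sc3 P1)
    have "0 = R u xz (R v xz xz) - R (R u xz v) xz xz - R v (R u xz xz) xz - R v xz (R u xz xz)"
      using WSS by simp
    also have "\<dots> = (e \<bullet> R u xz v) *\<^sub>R xz - (e \<bullet> v) *\<^sub>R \<pi> u - R v u xz + (2 * (e \<bullet> u)) *\<^sub>R \<pi> v - R v xz u"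
      unfolding T1 T2 T3 T4 two by (simp add: algebra_simps)
    finally show ?thesis by simp
  qed
  define s where "s = R v u xz"
  have Ruv: "R u v xz = - s" unfolding s_def by (rule anti)
  have B1: "R v xz u = R u xz v + s"
  proof -
    have "R u xz v + R xz v u + R v u xz = 0" by (rule bian)
    moreover have "R xz v u = - R v xz u" by (rule anti)
    ultimately show ?thesis unfolding s_def by (simp add: algebra_simps)
  qed
  have es: "e \<bullet> s = 0" unfolding s_def F1 inner_diff_right F4 using Gsym[of u v] by simp
  have Euv: "(e \<bullet> R u xz v) *\<^sub>R xz - (e \<bullet> v) *\<^sub>R \<pi> u - s + (2 * (e \<bullet> u)) *\<^sub>R \<pi> v - (R u xz v + s) = 0"
    using E[of u v] unfolding B1 s_def .
  have Evu: "(e \<bullet> (R u xz v + s)) *\<^sub>R xz - (e \<bullet> u) *\<^sub>R \<pi> v + s + (2 * (e \<bullet> v)) *\<^sub>R \<pi> u - R u xz v = 0"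
    using E[of v u] unfolding B1 Ruv by simp
  have ident: "((e \<bullet> R u xz v) *\<^sub>R xz - (e \<bullet> v) *\<^sub>R \<pi> u - s + (2 * (e \<bullet> u)) *\<^sub>R \<pi> v - (R u xz v + s))
      - ((e \<bullet> (R u xz v + s)) *\<^sub>R xz - (e \<bullet> u) *\<^sub>R \<pi> v + s + (2 * (e \<bullet> v)) *\<^sub>R \<pi> u - R u xz v)
      = - (e \<bullet> s) *\<^sub>R xz - (3 * (e \<bullet> v)) *\<^sub>R \<pi> u - 3 *\<^sub>R s + (3 * (e \<bullet> u)) *\<^sub>R \<pi> v"
    unfolding two three three' by (simp add: algebra_simps inner_add_right)
  have "- (e \<bullet> s) *\<^sub>R xz - (3 * (e \<bullet> v)) *\<^sub>R \<pi> u - 3 *\<^sub>R s + (3 * (e \<bullet> u)) *\<^sub>R \<pi> v = 0 - 0"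
    unfolding ident[symmetric] by (simp only: Euv Evu)
  then have "(3 * (e \<bullet> u)) *\<^sub>R \<pi> v - (3 * (e \<bullet> v)) *\<^sub>R \<pi> u - 3 *\<^sub>R s = 0"
    using es by (simp add: algebra_simps)
  then have "3 *\<^sub>R s = 3 *\<^sub>R ((e \<bullet> u) *\<^sub>R \<pi> v - (e \<bullet> v) *\<^sub>R \<pi> u)"
    by (simp add: algebra_simps)
  then have "s = (e \<bullet> u) *\<^sub>R \<pi> v - (e \<bullet> v) *\<^sub>R \<pi> u" by simp
  also have "\<dots> = (e \<bullet> u) *\<^sub>R v - (e \<bullet> v) *\<^sub>R u" by (simp add: \<pi>_def algebra_simps)
  finally show ?thesis unfolding s_def F1 .
qed

lemma alg_C:
  fixes D :: "'v::real_inner \<Rightarrow> 'v \<Rightarrow> 'v" and G :: "'v \<Rightarrow> 'v \<Rightarrow> real"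
  assumes anti: "\<And>u v. D u v - D v u = (e \<bullet> u) *\<^sub>R v - (e \<bullet> v) *\<^sub>R u"
    and skew: "\<And>u v w. G (D u v) w + G v (D u w) = 0"
    and Gsym: "\<And>a b. G a b = G b a"
    and Gadd: "\<And>a b c. G (a + b) c = G a c + G b c"
    and Gsc: "\<And>r a c. G (r *\<^sub>R a) c = r * G a c"
    and Gnd: "\<And>a. (\<And>w. G a w = 0) \<Longrightarrow> a = 0"
    and Gxi: "\<And>w. G xz w = e \<bullet> w"
  shows "D u v = G u v *\<^sub>R xz - (e \<bullet> v) *\<^sub>R u"
proof -
  have Gdiff: "G (a - b) c = G a c - G b c" for a b c
    using Gadd[of a "(-1) *\<^sub>R b" c] Gsc[of "-1" b c] by simp
  define C where "C a b c = G (D a b) c - (G a b * (e \<bullet> c) - (e \<bullet> b) * G a c)" for a b c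
  have Cskew: "C a b c = - C a c b" for a b c
    unfolding C_def using skew[of a b c] Gsym[of b "D a c"] Gsym[of a b] Gsym[of a c] by (simp add: algebra_simps)
  have Csym: "C a b c = C b a c" for a b c
  proof -
    have "G (D a b) c - G (D b a) c = G ((e \<bullet> a) *\<^sub>R b - (e \<bullet> b) *\<^sub>R a) c"
      using anti[of a b] Gdiff by metis
    also have "\<dots> = (e \<bullet> a) * G b c - (e \<bullet> b) * G a c" by (simp add: Gdiff Gsc)
    finally show ?thesis unfolding C_def using Gsym[of a b] by (simp add: algebra_simps)
  qed
  have C0: "C a b c = 0" for a b c
  proof -
    have "C a b c = - C a c b" by (rule Cskew)
    also have "\<dots> = - C c a b" using Csym[of a c b] by simp
    also have "\<dots> = C c b a" using Cskew[of c a b] by simp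
    also have "\<dots> = C b c a" using Csym[of c b a] by simp
    also have "\<dots> = - C b a c" using Cskew[of b c a] by simp
    also have "\<dots> = - C a b c" using Csym[of b a c] by simp
    finally show ?thesis by simp
  qed
  have "G (D u v - (G u v *\<^sub>R xz - (e \<bullet> v) *\<^sub>R u)) w = 0" for w
    using C0[of u v w] unfolding C_def by (simp add: Gdiff Gsc Gxi)
  then have "D u v - (G u v *\<^sub>R xz - (e \<bullet> v) *\<^sub>R u) = 0" by (rule Gnd)
  then show ?thesis by simp
qed

context cm begin

lemma Dp_xi1: "K_contact U eta xi phi g \<Longrightarrow> x \<in> U \<Longrightarrow> Dp x (xi x) a = 0"
  using Dphi_xi_X[OF _ sv_const, of x a] Dphi_tensor[OF sv_xi sv_const, of x a] by simp

lemma Dp_xi2: "K_contact U eta xi phi g \<Longrightarrow> x \<in> U \<Longrightarrow> Dp x a (xi x) = - a + (eta x \<bullet> a) *\<^sub>R xi x"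
  using Dphi_X_xi[OF _ sv_const, of x a] Dphi_tensor[OF sv_const sv_xi, of x a] by simp

lemma eta_Dp: "K_contact U eta xi phi g \<Longrightarrow> x \<in> U \<Longrightarrow>
    eta x \<bullet> Dp x a b = gpt g x a b - (eta x \<bullet> a) * (eta x \<bullet> b)"
  using eta_Dphi[OF _ sv_const sv_const, of x a b] Dphi_tensor[OF sv_const sv_const, of x a b] by simp

lemma Dp_skew: "x \<in> U \<Longrightarrow> gpt g x (Dp x a b) c + gpt g x b (Dp x a c) = 0"
  using Dphi_skew[OF sv_const sv_const sv_const, of x a b c] Dphi_tensor[OF sv_const sv_const, of x a b]
    Dphi_tensor[OF sv_const sv_const, of x a c] by simp

lemma Rm_xi: "K_contact U eta xi phi g \<Longrightarrow> x \<in> U \<Longrightarrow> Rm g x a b (xi x) = Dp x b a - Dp x a b"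
  using curv_Rm[OF sv_const sv_const sv_xi, of x a b] curv_xi[OF _ sv_const sv_const, of x a b]
    Dphi_tensor[OF sv_const sv_const, of x a b] Dphi_tensor[OF sv_const sv_const, of x b a] by simp

lemma WSS_pt:
  assumes W: "weakly_semi_symmetric U eta xi phi g" and x: "x \<in> U"
  shows "Rm g x a (xi x) (Rm g x b (xi x) (xi x)) - Rm g x (Rm g x a (xi x) b) (xi x) (xi x)
     - Rm g x b (Rm g x a (xi x) (xi x)) (xi x) - Rm g x b (xi x) (Rm g x a (xi x) (xi x)) = 0"
proof -
  let ?X = "\<lambda>_::real^'n. a" and ?Y = "\<lambda>_::real^'n. b"
  have h: "curv g ?X xi (curv g ?Y xi xi) x - curv g (curv g ?X xi ?Y) xi xi x
      - curv g ?Y (curv g ?X xi xi) xi x - curv g ?Y xi (curv g ?X xi xi) x = 0"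
    using W x sv_const sv_xi unfolding weakly_semi_symmetric_def by blast
  have c1: "curv g ?X xi (curv g ?Y xi xi) x = Rm g x a (xi x) (Rm g x b (xi x) (xi x))"
    using curv_Rm[OF sv_const sv_xi sv_curv[OF sv_const sv_xi sv_xi] x] curv_Rm[OF sv_const sv_xi sv_xi x] by simp
  have c2: "curv g (curv g ?X xi ?Y) xi xi x = Rm g x (Rm g x a (xi x) b) (xi x) (xi x)"
    using curv_Rm[OF sv_curv[OF sv_const sv_xi sv_const] sv_xi sv_xi x] curv_Rm[OF sv_const sv_xi sv_const x] by simp
  have c3: "curv g ?Y (curv g ?X xi xi) xi x = Rm g x b (Rm g x a (xi x) (xi x)) (xi x)"
    using curv_Rm[OF sv_const sv_curv[OF sv_const sv_xi sv_xi] sv_xi x] curv_Rm[OF sv_const sv_xi sv_xi x] by simp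
  have c4: "curv g ?Y xi (curv g ?X xi xi) x = Rm g x b (xi x) (Rm g x a (xi x) (xi x))"
    using curv_Rm[OF sv_const sv_xi sv_curv[OF sv_const sv_xi sv_xi] x] curv_Rm[OF sv_const sv_xi sv_xi x] by simp
  show ?thesis using h unfolding c1 c2 c3 c4 .
qed

lemma Dp_formula:
  assumes K: "K_contact U eta xi phi g" and W: "weakly_semi_symmetric U eta xi phi g" and x: "x \<in> U"
  shows "Dp x u v = gpt g x u v *\<^sub>R xi x - (eta x \<bullet> v) *\<^sub>R u"
proof (rule alg_C[where D = "Dp x" and G = "gpt g x" and e = "eta x"])
  show "\<And>u v. Dp x u v - Dp x v u = (eta x \<bullet> u) *\<^sub>R v - (eta x \<bullet> v) *\<^sub>R u"
  proof -
    fix u v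
    show "Dp x u v - Dp x v u = (eta x \<bullet> u) *\<^sub>R v - (eta x \<bullet> v) *\<^sub>R u"
    proof (rule alg_main[where R = "Rm g x" and D = "Dp x" and G = "gpt g x" and xz = "xi x"])
      show "\<And>a b c d. Rm g x (a + b) c d = Rm g x a c d + Rm g x b c d" by (rule Rm_add1)
      show "\<And>a b c d. Rm g x a (b + c) d = Rm g x a b d + Rm g x a c d" by (rule Rm_add2)
      show "\<And>a b c d. Rm g x a b (c + d) = Rm g x a b c + Rm g x a b d" by (rule Rm_add3)
      show "\<And>r a c d. Rm g x (r *\<^sub>R a) c d = r *\<^sub>R Rm g x a c d" by (rule Rm_scale1)
      show "\<And>r a c d. Rm g x a (r *\<^sub>R c) d = r *\<^sub>R Rm g x a c d" by (rule Rm_scale2)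
      show "\<And>r a c d. Rm g x a c (r *\<^sub>R d) = r *\<^sub>R Rm g x a c d" by (rule Rm_scale3)
      show "\<And>a b c. Rm g x b a c = - Rm g x a b c" by (rule Rm_antisym)
      show "\<And>a b c. Rm g x a b c + Rm g x b c a + Rm g x c a b = 0" by (rule Rm_bianchi[OF x])
      show "\<And>a b. Rm g x a b (xi x) = Dp x b a - Dp x a b" by (rule Rm_xi[OF K x])
      show "\<And>a. Dp x (xi x) a = 0" by (rule Dp_xi1[OF K x])
      show "\<And>a. Dp x a (xi x) = - a + (eta x \<bullet> a) *\<^sub>R xi x" by (rule Dp_xi2[OF K x])
      show "\<And>a b. eta x \<bullet> Dp x a b = gpt g x a b - (eta x \<bullet> a) * (eta x \<bullet> b)" by (rule eta_Dp[OF K x])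
      show "\<And>a b. gpt g x a b = gpt g x b a" by (rule gpt_sym[OF x])
      show "eta x \<bullet> xi x = 1" by (rule eta_xi[OF x])
      show "\<And>u v. Rm g x u (xi x) (Rm g x v (xi x) (xi x)) - Rm g x (Rm g x u (xi x) v) (xi x) (xi x)
          - Rm g x v (Rm g x u (xi x) (xi x)) (xi x) - Rm g x v (xi x) (Rm g x u (xi x) (xi x)) = 0"
        by (rule WSS_pt[OF W x])
    qed
  qed
  show "\<And>u v w. gpt g x (Dp x u v) w + gpt g x v (Dp x u w) = 0" by (rule Dp_skew[OF x])
  show "\<And>a b. gpt g x a b = gpt g x b a" by (rule gpt_sym[OF x])
  show "\<And>a b c. gpt g x (a + b) c = gpt g x a c + gpt g x b c" by (rule gpt_add1)
  show "\<And>r a c. gpt g x (r *\<^sub>R a) c = r * gpt g x a c" by (rule gpt_scale1)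
  show "\<And>a. (\<And>w. gpt g x a w = 0) \<Longrightarrow> a = 0" by (rule g_nondeg[OF x])
  show "\<And>w. gpt g x (xi x) w = eta x \<bullet> w" by (rule g_xi[OF x])
qed

end

theorem corollary1:
  fixes U :: "(real^'n::finite) set"
    and eta xi :: "real^'n \<Rightarrow> real^'n"
    and phi g :: "real^'n \<Rightarrow> real^'n^'n"
  assumes "contact_metric_structure U eta xi phi g"
    and "K_contact U eta xi phi g"
    and "weakly_semi_symmetric U eta xi phi g"
  shows "Sasakian U eta xi phi g"
proof -
  interpret cm U eta xi phi g by unfold_locales (rule assms(1))
  show ?thesis unfolding Sasakian_def
  proof (intro allI impI ballI)
    fix X Y x assume X: "smooth_vf U X" and Y: "smooth_vf U Y" and x: "x \<in> U"
    have "nabla g X (\<lambda>y. phi y *v Y y) x - phi x *v nabla g X Y x = Dphi X Y x" by (simp add: Dphi_def)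
    also have "\<dots> = Dp x (X x) (Y x)" by (rule Dphi_tensor[OF X Y x])
    also have "\<dots> = gpt g x (X x) (Y x) *\<^sub>R xi x - (eta x \<bullet> Y x) *\<^sub>R X x"
      by (rule Dp_formula[OF assms(2) assms(3) x])
    finally show "nabla g X (\<lambda>y. phi y *v Y y) x - phi x *v nabla g X Y x
        = gpt g x (X x) (Y x) *\<^sub>R xi x - (eta x \<bullet> Y x) *\<^sub>R X x" .
  qed
qed


end
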